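(* Let $E: y^2=x^3+Ax^2+Bx$ ($A,B\in\mathbb{Z}$) with $E(\mathbb{Q})[2]\simeq\mathbb{Z}/2\mathbb{Z}$, let $\Delta$ be the discriminant of $E$ and $\Delta'$ the discriminant of $E'$. Let $d$ be a squarefree integer and $p$ a prime with $p\mid d$ and $\gcd(p,2\Delta)=1$. Then $$W_p^d=\begin{cases}\langle \Delta\rangle & \text{if } \left(\frac{\Delta'}{p}\right)=-1,\\ \langle \Delta,\ d(A+2\sqrt{B})\rangle & \text{if } \left(\frac{\Delta'}{p}\right)=1,\end{cases}$$ as subgroups of $\mathbb{Q}_p^\times/(\mathbb{Q}_p^\times)^2$.
   Context: $E': y^2=x^3-2Ax^2+(A^2-4B)x$, $\phi:E\to E'$ the 2-isogeny with kernel $\langle(0,0)\rangle$; $E^d,E'^d$ are the quadratic twists by $d$ with twisted isogeny $\phi$. Up to squares, $\Delta\equiv A^2-4B$ and $\Delta'\equiv B$; in particular when $(\Delta'/p)=1$, $B$ is a square in $\mathbb{Q}_p$ so $\sqrt{B}\in\mathbb{Q}_p$. $W_p^d=\kappa_p(E'^d(\mathbb{Q}_p)/\phi(E^d(\mathbb{Q}_p)))\subset \mathbb{Q}_p^\times/(\mathbb{Q}_p^\times)^2$, where $\kappa_p$ is the local Kummer map (on the untwisted curve it sends $(x,y)\ne(0,0)$ to $x$ and $(0,0)$ to $\Delta$). *)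

theory Defs
  imports "HOL-Number_Theory.Number_Theory" "HOL-Computational_Algebra.Squarefree"
begin

text \<open>The ring Z_p is modelled as the inverse limit of Z/p^n Z: compatible
  sequences f with 0 <= f n < p^n and f n = f (n+1) mod p^n.\<close>

type_synonym zp = "nat \<Rightarrow> int"

definition zp_carrier :: "int \<Rightarrow> zp set" where
  "zp_carrier p = {f. \<forall>n. 0 \<le> f n \<and> f n < p ^ n \<and> f n = f (Suc n) mod p ^ n}"

definition zp_of_int :: "int \<Rightarrow> int \<Rightarrow> zp" where
  "zp_of_int p a = (\<lambda>n. a mod p ^ n)"

definition zp_add :: "int \<Rightarrow> zp \<Rightarrow> zp \<Rightarrow> zp" where
  "zp_add p f g = (\<lambda>n. (f n + g n) mod p ^ n)"

definition zp_mult :: "int \<Rightarrow> zp \<Rightarrow> zp \<Rightarrow> zp" where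
  "zp_mult p f g = (\<lambda>n. (f n * g n) mod p ^ n)"

definition zp_zero :: zp where
  "zp_zero = (\<lambda>n. 0)"

definition zp_val :: "zp \<Rightarrow> nat" where
  "zp_val f = (LEAST n. f (Suc n) \<noteq> 0)"

definition zp_shift :: "int \<Rightarrow> nat \<Rightarrow> zp \<Rightarrow> zp" where
  "zp_shift p m f = (\<lambda>n. f (n + m) div p ^ m)"

text \<open>Q_p: every element is uniquely f / p^k with f in Z_p and (k = 0 or f a unit),
  so the pairs (k, f) with this normalisation condition form a faithful model of Q_p
  in which HOL equality is equality of p-adic numbers.\<close>

type_synonym qp = "nat \<times> zp"

definition Qp :: "int \<Rightarrow> qp set" where
  "Qp p = {(k, f). f \<in> zp_carrier p \<and> (k = 0 \<or> f 1 \<noteq> 0)}"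

definition qp_norm :: "int \<Rightarrow> nat \<Rightarrow> zp \<Rightarrow> qp" where
  "qp_norm p k h =
     (if h = zp_zero then (0, zp_zero)
      else (let m = min k (zp_val h) in (k - m, zp_shift p m h)))"

definition qp_of_int :: "int \<Rightarrow> int \<Rightarrow> qp" where
  "qp_of_int p a = (0, zp_of_int p a)"

definition qp_zero :: qp where
  "qp_zero = (0, zp_zero)"

definition qp_add :: "int \<Rightarrow> qp \<Rightarrow> qp \<Rightarrow> qp" where
  "qp_add p x y =
     (case x of (k, f) \<Rightarrow> case y of (l, g) \<Rightarrow>
        qp_norm p (max k l)
          (zp_add p (zp_mult p (zp_of_int p (p ^ (max k l - k))) f)
                    (zp_mult p (zp_of_int p (p ^ (max k l - l))) g)))"

definition qp_mult :: "int \<Rightarrow> qp \<Rightarrow> qp \<Rightarrow> qp" where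
  "qp_mult p x y = (case x of (k, f) \<Rightarrow> case y of (l, g) \<Rightarrow> qp_norm p (k + l) (zp_mult p f g))"

text \<open>A subset of Q_p^x / (Q_p^x)^2 is represented by its preimage in Q_p^x.
  sqclass p c is the preimage of the class of c.\<close>
definition sqclass :: "int \<Rightarrow> qp \<Rightarrow> qp set" where
  "sqclass p c = {qp_mult p c (qp_mult p t t) | t. t \<in> Qp p \<and> t \<noteq> qp_zero}"

text \<open>Preimages of the subgroups generated by one resp. two classes
  (Q_p^x/(Q_p^x)^2 is an elementary abelian 2-group).\<close>
definition sq_span1 :: "int \<Rightarrow> qp \<Rightarrow> qp set" where
  "sq_span1 p g = sqclass p (qp_of_int p 1) \<union> sqclass p g"

definition sq_span2 :: "int \<Rightarrow> qp \<Rightarrow> qp \<Rightarrow> qp set" where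
  "sq_span2 p g h = sqclass p (qp_of_int p 1) \<union> sqclass p g \<union> sqclass p h
                    \<union> sqclass p (qp_mult p g h)"

definition disc :: "int \<Rightarrow> int \<Rightarrow> int" where
  "disc a b = 16 * b^2 * (a^2 - 4 * b)"

text \<open>Points (None = point at infinity) over Q_p of y^2 = x^3 + a x^2 + b x.\<close>
definition qp_points :: "int \<Rightarrow> int \<Rightarrow> int \<Rightarrow> (qp \<times> qp) option set" where
  "qp_points p a b = {None} \<union>
     {Some (x, y) | x y. x \<in> Qp p \<and> y \<in> Qp p \<and>
        qp_mult p y y =
          qp_add p (qp_mult p x (qp_mult p x x))
            (qp_add p (qp_mult p (qp_of_int p a) (qp_mult p x x)) (qp_mult p (qp_of_int p b) x))}"

definition two_torsion_Q :: "int \<Rightarrow> int \<Rightarrow> (rat \<times> rat) option set" where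
  "two_torsion_Q a b = {None} \<union>
     {Some (x, 0) | x. x^3 + of_int a * x^2 + of_int b * x = 0}"

text \<open>Twists: E^d : y^2 = x^3 + dA x^2 + d^2 B x and
  E'^d : y^2 = x^3 - 2dA x^2 + d^2 (A^2 - 4B) x.
  Kummer map on E'^d(Q_p): O \<mapsto> 1, (0,0) \<mapsto> Delta, (x,y) \<mapsto> x.\<close>
definition kummer :: "int \<Rightarrow> int \<Rightarrow> int \<Rightarrow> (qp \<times> qp) option \<Rightarrow> qp" where
  "kummer p A B P = (case P of None \<Rightarrow> qp_of_int p 1
     | Some (x, y) \<Rightarrow> if x = qp_zero then qp_of_int p (disc A B) else x)"

text \<open>Preimage in Q_p^x of W_p^d = kappa_p(E'^d(Q_p)/phi(E^d(Q_p))); the image of the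
  quotient equals the image of E'^d(Q_p) under kappa_p.\<close>
definition W :: "int \<Rightarrow> int \<Rightarrow> int \<Rightarrow> int \<Rightarrow> qp set" where
  "W p A B d = (\<Union>P \<in> qp_points p (-2 * d * A) (d^2 * (A^2 - 4 * B)). sqclass p (kummer p A B P))"

end

theory Submission
  imports Defs
begin



locale pad =
  fixes p :: int
  assumes pr: "prime p"
begin

lemma p_pos: "p > 0" using pr prime_gt_0_int by blast
lemma p_gt1: "p > 1" using pr prime_gt_1_int by blast
lemma pp_pos: "p ^ n > 0" using p_pos by simp

definition eqv :: "(nat \<Rightarrow> int) \<Rightarrow> (nat \<Rightarrow> int) \<Rightarrow> bool" where
  "eqv F G \<longleftrightarrow> (\<forall>n. [F n = G n] (mod p ^ n))"

definition compat :: "(nat \<Rightarrow> int) \<Rightarrow> bool" where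
  "compat F \<longleftrightarrow> (\<forall>n. [F (Suc n) = F n] (mod p ^ n))"

definition den :: "nat \<Rightarrow> qp \<Rightarrow> nat \<Rightarrow> int" where
  "den N x = (\<lambda>n. p ^ (N - fst x) * snd x n)"

definition red :: "(nat \<Rightarrow> int) \<Rightarrow> zp" where
  "red F = (\<lambda>n. F n mod p ^ n)"

lemma eqv_refl[simp]: "eqv F F" by (simp add: eqv_def)
lemma eqv_sym: "eqv F G \<Longrightarrow> eqv G F" by (simp add: eqv_def cong_sym_eq)
lemma eqv_trans: "eqv F G \<Longrightarrow> eqv G H \<Longrightarrow> eqv F H" unfolding eqv_def by (metis (no_types) cong_trans)

lemma compat_le: assumes "compat F" "m \<le> n" shows "[F n = F m] (mod p ^ m)"
  using assms(2)
proof (induction n)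
  case 0 then show ?case by simp
next
  case (Suc n)
  show ?case
  proof (cases "m = Suc n")
    case True then show ?thesis by simp
  next
    case False
    then have "m \<le> n" using Suc by simp
    have "[F (Suc n) = F n] (mod p ^ n)" using assms(1) by (simp add: compat_def)
    then have "[F (Suc n) = F n] (mod p ^ m)"
      by (rule cong_dvd_modulus) (rule le_imp_power_dvd[OF \<open>m \<le> n\<close>])
    then show ?thesis using Suc.IH[OF \<open>m \<le> n\<close>] by (rule cong_trans)
  qed
qed

lemma compat_1: assumes "compat F" "1 \<le> n" shows "[F n = F 1] (mod p)"
  using compat_le[OF assms] by simp

lemma carrier_range: "f \<in> zp_carrier p \<Longrightarrow> 0 \<le> f n \<and> f n < p ^ n"
  unfolding zp_carrier_def by blast

lemma carrier_step: "f \<in> zp_carrier p \<Longrightarrow> f n = f (Suc n) mod p ^ n"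
  unfolding zp_carrier_def by blast

lemma carrier_mod: assumes "f \<in> zp_carrier p" shows "f n mod p ^ n = f n"
proof -
  have "0 \<le> f n" "f n < p ^ n" using carrier_range[OF assms] by auto
  then show ?thesis by (rule mod_pos_pos_trivial)
qed

lemma carrier_compat: assumes "f \<in> zp_carrier p" shows "compat f"
  unfolding compat_def cong_def
proof
  fix n
  have "f n = f (Suc n) mod p ^ n" using assms by (rule carrier_step)
  then show "f (Suc n) mod p ^ n = f n mod p ^ n" using carrier_mod[OF assms] by simp
qed

lemma carrier_le: assumes "f \<in> zp_carrier p" "m \<le> n" shows "f m = f n mod p ^ m"
  using compat_le[OF carrier_compat[OF assms(1)] assms(2)] carrier_mod[OF assms(1)]
  unfolding cong_def by simp

lemma carrier_eq: assumes "f \<in> zp_carrier p" "g \<in> zp_carrier p" "eqv f g" shows "f = g"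
proof
  fix n
  have "f n mod p^n = g n mod p^n" using assms(3) by (simp add: eqv_def cong_def)
  then show "f n = g n" using carrier_mod assms by simp
qed

lemma carrier_0: "f \<in> zp_carrier p \<Longrightarrow> f 0 = 0"
  using carrier_range[of f 0] by simp

lemma red_carrier: assumes "compat F" shows "red F \<in> zp_carrier p"
  unfolding zp_carrier_def red_def
proof (intro CollectI allI conjI)
  fix n
  show "0 \<le> F n mod p ^ n" "F n mod p ^ n < p ^ n" using pp_pos by auto
  have "F (Suc n) mod p ^ Suc n mod p ^ n = F (Suc n) mod p ^ n"
    by (simp add: mod_mod_cancel le_imp_power_dvd)
  also have "\<dots> = F n mod p ^ n" using assms by (simp add: compat_def cong_def)
  finally show "F n mod p ^ n = F (Suc n) mod p ^ Suc n mod p ^ n" by simp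
qed

lemma red_eqv: "eqv (red F) F"
  by (simp add: eqv_def red_def cong_def)

lemma compat_add: "compat F \<Longrightarrow> compat G \<Longrightarrow> compat (\<lambda>n. F n + G n)"
  by (simp add: compat_def cong_add)
lemma compat_mult: "compat F \<Longrightarrow> compat G \<Longrightarrow> compat (\<lambda>n. F n * G n)"
  by (simp add: compat_def cong_mult)
lemma compat_const: "compat (\<lambda>n. c)"
  by (simp add: compat_def)
lemma compat_smult: "compat F \<Longrightarrow> compat (\<lambda>n. c * F n)"
  by (simp add: compat_def cong_mult)

lemma eqv_cancel: assumes "compat F" "compat G" "eqv (\<lambda>n. p^j * F n) (\<lambda>n. p^j * G n)"
  shows "eqv F G"
  unfolding eqv_def
proof
  fix n
  have "[p^j * F (n+j) = p^j * G (n+j)] (mod p ^ (n+j))" using assms(3) by (simp add: eqv_def)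
  then have "(p^j * F (n+j)) mod (p^j * p^n) = (p^j * G (n+j)) mod (p^j * p^n)"
    by (simp add: cong_def power_add mult.commute)
  then have "p^j * (F (n+j) mod p^n) = p^j * (G (n+j) mod p^n)"
    by (simp only: mod_mult_mult1)
  then have "[F (n+j) = G (n+j)] (mod p^n)" using p_pos by (simp add: cong_def)
  moreover have "[F (n+j) = F n] (mod p^n)" "[G (n+j) = G n] (mod p^n)"
    using compat_le assms by auto
  ultimately show "[F n = G n] (mod p^n)"
    by (metis (no_types) cong_sym cong_trans)
qed

lemma eqv_cong1: assumes "eqv F G" shows "[F 1 = G 1] (mod p)"
proof -
  have "[F 1 = G 1] (mod p ^ 1)" using assms unfolding eqv_def by blast
  then show ?thesis by simp
qed

end


context pad begin

lemma eqv_add: "eqv F F' \<Longrightarrow> eqv G G' \<Longrightarrow> eqv (\<lambda>n. F n + G n) (\<lambda>n. F' n + G' n)"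
  unfolding eqv_def by (blast intro: cong_add)
lemma eqv_mult: "eqv F F' \<Longrightarrow> eqv G G' \<Longrightarrow> eqv (\<lambda>n. F n * G n) (\<lambda>n. F' n * G' n)"
  unfolding eqv_def by (blast intro: cong_mult)
lemma eqv_smult: "eqv F F' \<Longrightarrow> eqv (\<lambda>n. c * F n) (\<lambda>n. c * F' n)"
  unfolding eqv_def by (blast intro: cong_mult cong_refl)

lemma zp_mult_red: "zp_mult p f g = red (\<lambda>n. f n * g n)"
  by (simp add: zp_mult_def red_def)
lemma zp_add_red: "zp_add p f g = red (\<lambda>n. f n + g n)"
  by (simp add: zp_add_def red_def)
lemma zp_of_int_red: "zp_of_int p a = red (\<lambda>n. a)"
  by (simp add: zp_of_int_def red_def)

lemma zp_mult_carrier: "f \<in> zp_carrier p \<Longrightarrow> g \<in> zp_carrier p \<Longrightarrow> zp_mult p f g \<in> zp_carrier p"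
  unfolding zp_mult_red by (intro red_carrier compat_mult carrier_compat)
lemma zp_add_carrier: "f \<in> zp_carrier p \<Longrightarrow> g \<in> zp_carrier p \<Longrightarrow> zp_add p f g \<in> zp_carrier p"
  unfolding zp_add_red by (intro red_carrier compat_add carrier_compat)
lemma zp_of_int_carrier: "zp_of_int p a \<in> zp_carrier p"
  unfolding zp_of_int_red by (intro red_carrier compat_const)
lemma zp_zero_carrier: "zp_zero \<in> zp_carrier p"
  unfolding zp_zero_def zp_carrier_def using pp_pos by auto

lemma Qp_iff: "x \<in> Qp p \<longleftrightarrow> snd x \<in> zp_carrier p \<and> (fst x = 0 \<or> snd x 1 \<noteq> 0)"
  by (cases x) (simp add: Qp_def)

lemma val_ex: assumes "h \<in> zp_carrier p" "h \<noteq> zp_zero" shows "\<exists>n. h (Suc n) \<noteq> 0"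
proof -
  obtain n where "h n \<noteq> 0" using assms(2) unfolding zp_zero_def by auto
  moreover from calculation have "n \<noteq> 0" using carrier_0[OF assms(1)] by (cases n) auto
  ultimately show ?thesis by (metis not0_implies_Suc)
qed

lemma val_nz: assumes "h \<in> zp_carrier p" "h \<noteq> zp_zero" shows "h (Suc (zp_val h)) \<noteq> 0"
  unfolding zp_val_def using val_ex[OF assms] by (rule LeastI_ex)

lemma val_zero: assumes "h \<in> zp_carrier p" "j \<le> zp_val h" shows "h j = 0"
proof (cases j)
  case 0 then show ?thesis using carrier_0[OF assms(1)] by simp
next
  case (Suc i)
  then have "i < zp_val h" using assms(2) by simp
  then have "\<not> h (Suc i) \<noteq> 0" unfolding zp_val_def by (rule not_less_Least)
  then show ?thesis using Suc by simp
qed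

lemma shift_dvd: assumes "h \<in> zp_carrier p" "m \<le> zp_val h" shows "p ^ m dvd h (n + m)"
proof -
  have "h m = h (n + m) mod p ^ m" using carrier_le[OF assms(1)] by simp
  moreover have "h m = 0" using val_zero[OF assms] .
  ultimately show ?thesis by (simp add: mod_eq_0_iff_dvd)
qed

lemma shift_mult: assumes "h \<in> zp_carrier p" "m \<le> zp_val h"
  shows "p ^ m * zp_shift p m h n = h (n + m)"
  unfolding zp_shift_def using shift_dvd[OF assms] by simp

lemma shift_carrier: assumes "h \<in> zp_carrier p" "m \<le> zp_val h"
  shows "zp_shift p m h \<in> zp_carrier p"
  unfolding zp_carrier_def
proof (intro CollectI allI conjI)
  fix n
  let ?s = "zp_shift p m h"
  have e: "\<And>n. p ^ m * ?s n = h (n + m)" using shift_mult[OF assms] .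
  have pm: "p ^ m > 0" by (rule pp_pos)
  have "0 \<le> h (n + m)" using carrier_range[OF assms(1)] by blast
  then have "0 \<le> p ^ m * ?s n" using e by simp
  then show "0 \<le> ?s n" using pm by (simp add: zero_le_mult_iff)
  have "h (n + m) < p ^ (n + m)" using carrier_range[OF assms(1)] by blast
  then have "p ^ m * ?s n < p ^ m * p ^ n" using e by (simp add: power_add mult.commute)
  then show "?s n < p ^ n" using pm by simp
  have "p ^ m * ?s n = h (Suc (n + m)) mod p ^ (n + m)"
    using e carrier_step[OF assms(1)] by metis
  also have "\<dots> = (p ^ m * ?s (Suc n)) mod (p ^ m * p ^ n)"
    using e[of "Suc n"] by (simp add: power_add mult.commute)
  also have "\<dots> = p ^ m * (?s (Suc n) mod p ^ n)" by (rule mod_mult_mult1)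
  finally show "?s n = ?s (Suc n) mod p ^ n" using pm p_pos by simp
qed

lemma shift_unit: assumes "h \<in> zp_carrier p" "h \<noteq> zp_zero"
  shows "\<not> p dvd zp_shift p (zp_val h) h 1"
proof
  let ?s = "zp_shift p (zp_val h) h"
  assume d: "p dvd ?s 1"
  have c: "?s \<in> zp_carrier p" using shift_carrier[OF assms(1)] by simp
  have "p ^ zp_val h * ?s 1 = h (Suc (zp_val h))" using shift_mult[OF assms(1), of "zp_val h" 1] by simp
  then have "?s 1 \<noteq> 0" using val_nz[OF assms] by auto
  moreover have "0 \<le> ?s 1" "?s 1 < p" using carrier_range[OF c, of 1] by auto
  ultimately show False using d zdvd_imp_le by fastforce
qed

lemma decomp: assumes "h \<in> zp_carrier p" "h \<noteq> zp_zero"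
  shows "\<exists>v U. U \<in> zp_carrier p \<and> \<not> p dvd U 1 \<and> eqv h (\<lambda>n. p ^ v * U n)"
proof (intro exI conjI)
  let ?v = "zp_val h"
  show "zp_shift p ?v h \<in> zp_carrier p" using shift_carrier[OF assms(1)] by simp
  show "\<not> p dvd zp_shift p ?v h 1" using shift_unit[OF assms] .
  show "eqv h (\<lambda>n. p ^ ?v * zp_shift p ?v h n)"
    unfolding eqv_def
  proof
    fix n
    have "h n = h (n + ?v) mod p ^ n" using carrier_le[OF assms(1)] by simp
    then show "[h n = p ^ ?v * zp_shift p ?v h n] (mod p ^ n)"
      using shift_mult[OF assms(1), of ?v n] by (simp add: cong_def)
  qed
qed

lemma norm_props: assumes "h \<in> zp_carrier p" "K \<le> N"
  shows "qp_norm p K h \<in> Qp p \<and> fst (qp_norm p K h) \<le> K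
     \<and> eqv (den N (qp_norm p K h)) (\<lambda>n. p ^ (N - K) * h n)"
proof (cases "h = zp_zero")
  case True
  then show ?thesis using zp_zero_carrier
    by (simp add: qp_norm_def Qp_def den_def zp_zero_def)
next
  case False
  define m where "m = min K (zp_val h)"
  have mv: "m \<le> zp_val h" "m \<le> K" unfolding m_def by auto
  have q: "qp_norm p K h = (K - m, zp_shift p m h)"
    using False by (simp add: qp_norm_def m_def Let_def)
  have c: "zp_shift p m h \<in> zp_carrier p" using shift_carrier[OF assms(1) mv(1)] .
  have "K - m = 0 \<or> zp_shift p m h 1 \<noteq> 0"
  proof (cases "K - m = 0")
    case False
    then have "m = zp_val h" unfolding m_def by auto
    then show ?thesis using shift_unit[OF assms(1) \<open>h \<noteq> zp_zero\<close>] by auto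
  qed simp
  then have "qp_norm p K h \<in> Qp p" using c q by (simp add: Qp_def)
  moreover have "eqv (den N (qp_norm p K h)) (\<lambda>n. p ^ (N - K) * h n)"
    unfolding eqv_def den_def q
  proof
    fix n
    have "N - (K - m) = (N - K) + m" using mv assms(2) by simp
    then have "p ^ (N - fst (K - m, zp_shift p m h)) * snd (K - m, zp_shift p m h) n
        = p ^ (N - K) * h (n + m)"
      using shift_mult[OF assms(1) mv(1)] by (simp add: power_add)
    moreover have "[h (n + m) = h n] (mod p ^ n)"
      using compat_le[OF carrier_compat[OF assms(1)]] by simp
    ultimately show "[p ^ (N - fst (K - m, zp_shift p m h)) * snd (K - m, zp_shift p m h) n
        = p ^ (N - K) * h n] (mod p ^ n)"
      by (simp add: cong_mult cong_refl)
  qed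
  ultimately show ?thesis using q by simp
qed

lemma den_compat: "x \<in> Qp p \<Longrightarrow> compat (den N x)"
  unfolding den_def by (intro compat_smult carrier_compat) (simp add: Qp_iff)

lemma den_scale: "fst x \<le> N \<Longrightarrow> den (N + j) x = (\<lambda>n. p ^ j * den N x n)"
  unfolding den_def by (rule ext) (simp add: power_add[symmetric] algebra_simps)

lemma den_mult: assumes "x \<in> Qp p" "y \<in> Qp p" "fst x \<le> N1" "fst y \<le> N2"
  shows "qp_mult p x y \<in> Qp p \<and> fst (qp_mult p x y) \<le> fst x + fst y
    \<and> eqv (den (N1 + N2) (qp_mult p x y)) (\<lambda>n. den N1 x n * den N2 y n)"
proof -
  obtain k f where x: "x = (k, f)" by (cases x)
  obtain l g where y: "y = (l, g)" by (cases y)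
  have fc: "f \<in> zp_carrier p" "g \<in> zp_carrier p" using assms x y by (auto simp: Qp_def)
  have m: "qp_mult p x y = qp_norm p (k + l) (zp_mult p f g)" by (simp add: x y qp_mult_def)
  have N: "k + l \<le> N1 + N2" using assms x y by simp
  note np = norm_props[OF zp_mult_carrier[OF fc] N]
  have "eqv (\<lambda>n. p ^ (N1 + N2 - (k + l)) * zp_mult p f g n) (\<lambda>n. den N1 x n * den N2 y n)"
    unfolding eqv_def
  proof
    fix n
    have e: "N1 + N2 - (k + l) = (N1 - k) + (N2 - l)" using assms x y by simp
    have "[zp_mult p f g n = f n * g n] (mod p ^ n)" by (simp add: zp_mult_def cong_def)
    then have "[p ^ (N1 + N2 - (k + l)) * zp_mult p f g n = p ^ (N1 + N2 - (k + l)) * (f n * g n)] (mod p ^ n)"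
      by (simp add: cong_mult cong_refl)
    then show "[p ^ (N1 + N2 - (k + l)) * zp_mult p f g n = den N1 x n * den N2 y n] (mod p ^ n)"
      by (simp add: den_def x y e power_add algebra_simps)
  qed
  then show ?thesis using np m x y by (auto intro: eqv_trans)
qed

lemma den_add: assumes "x \<in> Qp p" "y \<in> Qp p" "fst x \<le> N" "fst y \<le> N"
  shows "qp_add p x y \<in> Qp p \<and> fst (qp_add p x y) \<le> max (fst x) (fst y)
    \<and> eqv (den N (qp_add p x y)) (\<lambda>n. den N x n + den N y n)"
proof -
  obtain k f where x: "x = (k, f)" by (cases x)
  obtain l g where y: "y = (l, g)" by (cases y)
  have fc: "f \<in> zp_carrier p" "g \<in> zp_carrier p" using assms x y by (auto simp: Qp_def)
  define K where "K = max k l"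
  define h where "h = zp_add p (zp_mult p (zp_of_int p (p ^ (K - k))) f)
                    (zp_mult p (zp_of_int p (p ^ (K - l))) g)"
  have hc: "h \<in> zp_carrier p" unfolding h_def
    by (intro zp_add_carrier zp_mult_carrier zp_of_int_carrier fc)
  have m: "qp_add p x y = qp_norm p K h" by (simp add: x y qp_add_def K_def h_def)
  have N: "K \<le> N" using assms x y K_def by simp
  note np = norm_props[OF hc N]
  have "eqv (\<lambda>n. p ^ (N - K) * h n) (\<lambda>n. den N x n + den N y n)"
    unfolding eqv_def
  proof
    fix n
    have e1: "N - k = (N - K) + (K - k)" "N - l = (N - K) + (K - l)" using assms x y K_def by auto
    have "[h n = p ^ (K - k) * f n + p ^ (K - l) * g n] (mod p ^ n)"
      by (simp add: h_def zp_add_def zp_mult_def zp_of_int_def cong_def mod_simps)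
    then have "[p ^ (N - K) * h n = p ^ (N - K) * (p ^ (K - k) * f n + p ^ (K - l) * g n)] (mod p ^ n)"
      by (simp add: cong_mult cong_refl)
    then show "[p ^ (N - K) * h n = den N x n + den N y n] (mod p ^ n)"
      by (simp add: den_def x y e1 power_add algebra_simps)
  qed
  then show ?thesis using np m x y K_def by (auto intro: eqv_trans)
qed

lemma den_of_int: "qp_of_int p a \<in> Qp p \<and> fst (qp_of_int p a) = 0
   \<and> eqv (den N (qp_of_int p a)) (\<lambda>n. p ^ N * a)"
proof (intro conjI)
  show "qp_of_int p a \<in> Qp p" using zp_of_int_carrier by (simp add: qp_of_int_def Qp_def)
  show "fst (qp_of_int p a) = 0" by (simp add: qp_of_int_def)
  show "eqv (den N (qp_of_int p a)) (\<lambda>n. p ^ N * a)"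
    unfolding eqv_def by (simp add: qp_of_int_def den_def zp_of_int_def cong_def mod_simps)
qed

lemma den_zero: "qp_zero \<in> Qp p \<and> fst qp_zero = 0 \<and> den N qp_zero = (\<lambda>n. 0)"
proof (intro conjI)
  show "qp_zero \<in> Qp p" using zp_zero_carrier by (simp add: qp_zero_def Qp_def)
qed (simp_all add: qp_zero_def den_def zp_zero_def)

lemma qp_eq: assumes "x \<in> Qp p" "y \<in> Qp p" "fst x \<le> N" "fst y \<le> N"
  and e: "eqv (den N x) (den N y)" shows "x = y"
proof -
  have main: "x = y" if xy: "x \<in> Qp p" "y \<in> Qp p" "fst x \<le> N" "fst y \<le> N"
     "eqv (den N x) (den N y)" "fst x \<le> fst y" for x y
  proof -
    obtain k f where x: "x = (k, f)" by (cases x)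
    obtain l g where y: "y = (l, g)" by (cases y)
    have fc: "f \<in> zp_carrier p" "g \<in> zp_carrier p" using xy x y by (auto simp: Qp_def)
    have kl: "k \<le> l" "l \<le> N" using xy x y by auto
    have "eqv (\<lambda>n. p ^ (N - l) * (p ^ (l - k) * f n)) (\<lambda>n. p ^ (N - l) * g n)"
    proof -
      have "N - k = (N - l) + (l - k)" using kl by simp
      then show ?thesis using xy(5) by (simp add: den_def x y power_add algebra_simps)
    qed
    then have e2: "eqv (\<lambda>n. p ^ (l - k) * f n) g"
      by (rule eqv_cancel[OF compat_smult[OF carrier_compat[OF fc(1)]] carrier_compat[OF fc(2)]])
    show ?thesis
    proof (cases "k = l")
      case True
      then have "eqv f g" using e2 by simp
      then have "f = g" using carrier_eq fc by blast
      then show ?thesis using x y True by simp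
    next
      case False
      then have "l \<noteq> 0" "l - k > 0" using kl by auto
      then have g1: "g 1 \<noteq> 0" using xy(2) y by (simp add: Qp_def)
      have "[p ^ (l - k) * f 1 = g 1] (mod p)" using eqv_cong1[OF e2] by simp
      moreover have "p dvd p ^ (l - k) * f 1" using \<open>l - k > 0\<close> by (simp add: dvd_power)
      ultimately have "p dvd g 1" using cong_dvd_iff by blast
      moreover have "0 \<le> g 1" "g 1 < p" using carrier_range[OF fc(2), of 1] by auto
      ultimately show ?thesis using g1 zdvd_imp_le by fastforce
    qed
  qed
  show ?thesis
  proof (cases "fst x \<le> fst y")
    case True then show ?thesis using main assms by blast
  next
    case False then show ?thesis using main[of y x] assms eqv_sym by auto
  qed
qed

end


context pad begin

lemma den_mult': assumes "x \<in> Qp p" "y \<in> Qp p" "fst x \<le> N1" "fst y \<le> N2"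
  "eqv (den N1 x) X" "eqv (den N2 y) Y"
  shows "qp_mult p x y \<in> Qp p \<and> fst (qp_mult p x y) \<le> N1 + N2
    \<and> eqv (den (N1 + N2) (qp_mult p x y)) (\<lambda>n. X n * Y n)"
proof -
  note D = den_mult[OF assms(1-4)]
  have "eqv (\<lambda>n. den N1 x n * den N2 y n) (\<lambda>n. X n * Y n)" by (rule eqv_mult[OF assms(5,6)])
  then have "eqv (den (N1 + N2) (qp_mult p x y)) (\<lambda>n. X n * Y n)"
    using D by (blast intro: eqv_trans)
  moreover have "fst (qp_mult p x y) \<le> N1 + N2" using D assms(3,4) by linarith
  ultimately show ?thesis using D by blast
qed

lemma den_add': assumes "x \<in> Qp p" "y \<in> Qp p" "fst x \<le> N" "fst y \<le> N"
  "eqv (den N x) X" "eqv (den N y) Y"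
  shows "qp_add p x y \<in> Qp p \<and> fst (qp_add p x y) \<le> N
    \<and> eqv (den N (qp_add p x y)) (\<lambda>n. X n + Y n)"
proof -
  note D = den_add[OF assms(1-4)]
  have "eqv (\<lambda>n. den N x n + den N y n) (\<lambda>n. X n + Y n)" by (rule eqv_add[OF assms(5,6)])
  then have "eqv (den N (qp_add p x y)) (\<lambda>n. X n + Y n)"
    using D by (blast intro: eqv_trans)
  moreover have "fst (qp_add p x y) \<le> N" using D assms(3,4) by linarith
  ultimately show ?thesis using D by blast
qed

lemma den_up: assumes "fst x \<le> N" "N \<le> M" "eqv (den N x) X"
  shows "eqv (den M x) (\<lambda>n. p ^ (M - N) * X n)"
proof -
  have "den M x = (\<lambda>n. p ^ (M - N) * den N x n)"
    using den_scale[OF assms(1), of "M - N"] assms(2) by simp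
  then show ?thesis using eqv_smult[OF assms(3)] by simp
qed

lemma pow_uniq: assumes "p ^ i * u = p ^ j * v" "\<not> p dvd u" "\<not> p dvd v" shows "i = j"
proof -
  have *: False if "p ^ i * u = p ^ j * v" "\<not> p dvd u" "i < j" for i j u v
  proof -
    have "p ^ j = p ^ i * p ^ (j - i)" using \<open>i < j\<close> by (simp add: power_add[symmetric])
    then have "p ^ i * u = p ^ i * (p ^ (j - i) * v)" using that(1) by simp
    then have "u = p ^ (j - i) * v" using p_pos by simp
    then show False using that(2,3) by (simp add: dvd_power)
  qed
  show ?thesis
  proof (rule ccontr)
    assume "i \<noteq> j"
    then have "i < j \<or> j < i" by arith
    then show False using *[OF assms(1,2)] *[OF assms(1)[symmetric] assms(3)] by blast
  qed
qed

lemma s1: assumes "[p ^ a * y ^ 2 = p ^ b * w] (mod p ^ n)" shows "\<exists>k. p ^ a * y ^ 2 = p ^ b * w + p ^ n * k"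
proof -
  have "[p ^ b * w = p ^ a * y ^ 2] (mod p ^ n)" using assms(1) by (rule cong_sym)
  then show ?thesis unfolding cong_iff_lin by blast
qed
lemma s2: assumes "p ^ a * y ^ 2 = p ^ b * w'" "y = 0" "\<not> p dvd w'" shows False
proof -
  have "w' = 0" using assms p_pos by simp
  then show False using assms by simp
qed
lemma s3: assumes "y ^ 2 = p ^ (c * 2) * y' ^ 2" "p ^ a * y ^ 2 = p ^ b * w'"
  shows "p ^ (a + c * 2) * y' ^ 2 = p ^ b * w'" using assms by (simp add: power_add)
lemma s4: assumes "a + c * 2 = b" "p ^ (a + c * 2) * y' ^ 2 = p ^ b * w'" shows "y' ^ 2 = w'"
  using assms p_pos by simp
lemma t2: assumes "p ^ a * y ^ 2 = p ^ b * w + p ^ n * k" "p ^ n = p ^ b * p ^ (n - b)"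
  shows "p ^ a * y ^ 2 = p ^ b * (w + p ^ (n - b) * k)" using assms by (simp add: algebra_simps)
lemma t4: "\<not> p dvd w \<Longrightarrow> p dvd p ^ (n - b) * k \<Longrightarrow> \<not> p dvd (w + p ^ (n - b) * k)"
  by (simp add: dvd_add_left_iff)
lemma t6: "(p ^ c * y') ^ 2 = p ^ (c * 2) * y' ^ 2" by (simp add: power_mult_distrib power_mult)

lemma T3int: assumes "\<not> p dvd w" "b < n" "[p ^ a * y ^ 2 = p ^ b * w] (mod p ^ n)"
  shows "a \<le> b \<and> even (b - a) \<and> (\<exists>r. [r ^ 2 = w] (mod p))"
proof -
  obtain k where k: "p ^ a * y ^ 2 = p ^ b * w + p ^ n * k" using s1[OF assms(3)] by blast
  define w' where "w' = w + p ^ (n - b) * k"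
  have nb: "p ^ n = p ^ b * p ^ (n - b)" using assms(2) by (simp add: power_add[symmetric])
  have e: "p ^ a * y ^ 2 = p ^ b * w'" unfolding w'_def by (rule t2[OF k nb])
  have pk: "p dvd p ^ (n - b) * k" using assms(2) by (simp add: dvd_power)
  have w'nd: "\<not> p dvd w'" unfolding w'_def by (rule t4[OF assms(1) pk])
  have "y \<noteq> 0" using s2[OF e _ w'nd] by blast
  have nu: "\<not> is_unit p" using pr not_prime_unit by blast
  obtain y' where y': "y = p ^ multiplicity p y * y'" "\<not> p dvd y'"
    using multiplicity_decompose'[OF \<open>y \<noteq> 0\<close> nu] by blast
  define c where "c = multiplicity p y"
  have yc: "y = p ^ c * y'" using y'(1) unfolding c_def .
  have "y ^ 2 = p ^ (c * 2) * y' ^ 2" unfolding yc by (rule t6)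
  then have e2: "p ^ (a + c * 2) * y' ^ 2 = p ^ b * w'" using e by (rule s3)
  have ny: "\<not> p dvd y' ^ 2"
  proof
    assume "p dvd y' ^ 2"
    with pr have "p dvd y'" by (rule prime_dvd_power)
    with y'(2) show False by contradiction
  qed
  have ab: "a + c * 2 = b" by (rule pow_uniq[OF e2 ny w'nd])
  have yw: "y' ^ 2 = w'" by (rule s4[OF ab e2])
  have "y' ^ 2 - w = p ^ (n - b) * k" using yw unfolding w'_def by simp
  then have "p dvd y' ^ 2 - w" using pk by metis
  then have "[y' ^ 2 = w] (mod p)" unfolding cong_iff_dvd_diff .
  moreover have "a \<le> b" using ab by linarith
  moreover have "b - a = 2 * c" using ab by linarith
  ultimately show ?thesis by auto
qed

lemma lift: assumes "1 \<le> n" "[c * R ^ 2 = u] (mod p ^ n)" "\<not> p dvd (2 * c * R)"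
  shows "\<exists>R'. [R' = R] (mod p ^ n) \<and> [c * R' ^ 2 = u] (mod p ^ Suc n)"
proof -
  have "[u = c * R ^ 2] (mod p ^ n)" using assms(2) by (rule cong_sym)
  then have "p ^ n dvd (u - c * R ^ 2)" unfolding cong_iff_dvd_diff .
  then obtain \<delta> where d: "u - c * R ^ 2 = p ^ n * \<delta>" by blast
  have "coprime p (2 * c * R)" by (rule prime_imp_coprime[OF pr assms(3)])
  then have "coprime (2 * c * R) p" by (rule coprime_commute[THEN iffD1])
  then obtain i where i: "[(2 * c * R) * i = 1] (mod p)" using cong_solve_coprime_int by blast
  then have "[1 = 2 * c * R * i] (mod p)" by (rule cong_sym)
  then have pd: "p dvd (1 - 2 * c * R * i)" unfolding cong_iff_dvd_diff .
  define t where "t = \<delta> * i"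
  define R' where "R' = R + p ^ n * t"
  have "u - c * R' ^ 2 = p ^ n * (\<delta> * (1 - 2 * c * R * i)) - p ^ (2 * n) * (c * t ^ 2)"
    using d unfolding R'_def t_def by (simp add: power2_eq_square power_mult algebra_simps)
  moreover have "p ^ Suc n dvd p ^ n * (\<delta> * (1 - 2 * c * R * i))"
    using pd by (simp add: mult_dvd_mono)
  moreover have "p ^ Suc n dvd p ^ (2 * n) * (c * t ^ 2)"
  proof -
    have "p ^ Suc n dvd p ^ (2 * n)" using assms(1) by (intro le_imp_power_dvd) simp
    then show ?thesis by (rule dvd_mult2)
  qed
  ultimately have "p ^ Suc n dvd (u - c * R' ^ 2)" by simp
  then have "[u = c * R' ^ 2] (mod p ^ Suc n)" unfolding cong_iff_dvd_diff .
  then have "[c * R' ^ 2 = u] (mod p ^ Suc n)" by (rule cong_sym)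
  moreover have "[R' = R] (mod p ^ n)"
  proof -
    have "R' - R = p ^ n * t" by (simp add: R'_def)
    then have "p ^ n dvd R' - R" by simp
    then show ?thesis unfolding cong_iff_dvd_diff .
  qed
  ultimately show ?thesis by blast
qed

lemma hensel: assumes p2: "\<not> p dvd 2" and cc: "compat c" and cu: "compat U"
  and c1: "\<not> p dvd c 1" and u1: "\<not> p dvd U 1" and r: "[c 1 * r ^ 2 = U 1] (mod p)"
  shows "\<exists>S. compat S \<and> \<not> p dvd S 1 \<and> eqv (\<lambda>n. c n * S n ^ 2) U"
proof -
  have rnd: "\<not> p dvd r"
  proof
    assume "p dvd r"
    then have "p dvd r ^ 2" by (simp add: power2_eq_square)
    then have "p dvd c 1 * r ^ 2" by (rule dvd_mult)
    then have "p dvd U 1" using r cong_dvd_iff by blast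
    then show False using u1 by simp
  qed
  define P where "P = (\<lambda>n R'. [R' = r] (mod p) \<and> [c (Suc n) * R' ^ 2 = U (Suc n)] (mod p ^ Suc n))"
  have step: "\<exists>R'. [R' = Rn] (mod p ^ n) \<and> P n R'"
    if h: "[c n * Rn ^ 2 = U n] (mod p ^ n)" "[Rn = r] (mod p)" for n Rn
  proof (cases "n = 0")
    case True
    then show ?thesis using r by (intro exI[of _ r]) (simp add: P_def)
  next
    case False
    have a1: "[c (Suc n) = c n] (mod p ^ n)" and a2: "[U (Suc n) = U n] (mod p ^ n)"
      using cc cu by (auto simp: compat_def)
    have a: "[c (Suc n) * Rn ^ 2 = U (Suc n)] (mod p ^ n)"
    proof -
      have "[c (Suc n) * Rn ^ 2 = c n * Rn ^ 2] (mod p ^ n)" using a1 by (rule cong_mult) (rule cong_refl)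
      also have "[c n * Rn ^ 2 = U n] (mod p ^ n)" by (rule h(1))
      also have "[U n = U (Suc n)] (mod p ^ n)" using a2 by (rule cong_sym)
      finally show ?thesis .
    qed
    have "[c (Suc n) = c 1] (mod p)" using compat_1[OF cc] by simp
    then have "\<not> p dvd c (Suc n)" using c1 cong_dvd_iff by blast
    moreover have "\<not> p dvd Rn" using h(2) rnd cong_dvd_iff by blast
    ultimately have "\<not> p dvd (2 * c (Suc n) * Rn)" using p2 pr
      by (simp add: prime_dvd_mult_iff)
    then obtain R' where R': "[R' = Rn] (mod p ^ n)" "[c (Suc n) * R' ^ 2 = U (Suc n)] (mod p ^ Suc n)"
      using lift[OF _ a] False by auto
    have "p dvd p ^ n" using False by (simp add: dvd_power)
    with R'(1) have "[R' = Rn] (mod p)" by (rule cong_dvd_modulus)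
    then have "[R' = r] (mod p)" using h(2) cong_trans by blast
    then show ?thesis using R' by (auto simp: P_def)
  qed
  define R where "R = rec_nat r (\<lambda>n Rn. SOME R'. [R' = Rn] (mod p ^ n) \<and> P n R')"
  have R0: "R 0 = r" by (simp add: R_def)
  have RS: "R (Suc n) = (SOME R'. [R' = R n] (mod p ^ n) \<and> P n R')" for n
    by (simp add: R_def)
  have inv: "[c n * R n ^ 2 = U n] (mod p ^ n) \<and> [R n = r] (mod p)" for n
  proof (induction n)
    case 0 then show ?case by (simp add: R0)
  next
    case (Suc n)
    have "[R (Suc n) = R n] (mod p ^ n) \<and> P n (R (Suc n))"
      unfolding RS by (rule someI_ex) (rule step, use Suc.IH in auto)
    then show ?case unfolding P_def by blast
  qed
  have comp: "[R (Suc n) = R n] (mod p ^ n)" for n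
  proof -
    have "[R (Suc n) = R n] (mod p ^ n) \<and> P n (R (Suc n))"
      unfolding RS by (rule someI_ex) (rule step, use inv in auto)
    then show ?thesis by simp
  qed
  have "compat R" using comp by (simp add: compat_def)
  moreover have "\<not> p dvd R 1"
  proof -
    have "[R 1 = r] (mod p)" using inv[of 1] by blast
    then have "p dvd R 1 \<longleftrightarrow> p dvd r" by (rule cong_dvd_iff)
    then show ?thesis using rnd by simp
  qed
  moreover have "eqv (\<lambda>n. c n * R n ^ 2) U" unfolding eqv_def using inv by blast
  ultimately show ?thesis by blast
qed

end


context pad begin

lemma den_mult3: assumes "x \<in> Qp p" "y \<in> Qp p" "fst x \<le> N1" "fst y \<le> N2" "N1 + N2 = N3"
  "eqv (den N1 x) X" "eqv (den N2 y) Y"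
  shows "qp_mult p x y \<in> Qp p \<and> fst (qp_mult p x y) \<le> N3
    \<and> eqv (den N3 (qp_mult p x y)) (\<lambda>n. X n * Y n)"
  using den_mult'[OF assms(1-4,6,7)] assms(5) by simp

lemma mkq: assumes "compat S" "\<not> p dvd S 1" "k' = 0 \<or> j = 0"
  shows "(k', red (\<lambda>n. p ^ j * S n)) \<in> Qp p \<and> (k', red (\<lambda>n. p ^ j * S n)) \<noteq> qp_zero
    \<and> (\<forall>M. k' \<le> M \<longrightarrow> eqv (den M (k', red (\<lambda>n. p ^ j * S n))) (\<lambda>n. p ^ (M - k' + j) * S n))"
proof (intro conjI allI impI)
  have c: "red (\<lambda>n. p ^ j * S n) \<in> zp_carrier p" by (intro red_carrier compat_smult assms(1))
  have "k' = 0 \<or> red (\<lambda>n. p ^ j * S n) 1 \<noteq> 0"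
  proof (cases "k' = 0")
    case False
    then have "j = 0" using assms(3) by simp
    then have "red (\<lambda>n. p ^ j * S n) 1 = S 1 mod p" by (simp add: red_def)
    then show ?thesis using assms(2) by (simp add: dvd_eq_mod_eq_0)
  qed simp
  then show "(k', red (\<lambda>n. p ^ j * S n)) \<in> Qp p" using c by (simp add: Qp_def)
  show "(k', red (\<lambda>n. p ^ j * S n)) \<noteq> qp_zero"
  proof
    assume "(k', red (\<lambda>n. p ^ j * S n)) = qp_zero"
    then have "red (\<lambda>n. p ^ j * S n) (Suc j) = 0" by (simp add: qp_zero_def zp_zero_def)
    then have "p ^ j * p dvd p ^ j * S (Suc j)" by (simp add: red_def dvd_eq_mod_eq_0 mult.commute)
    then have "p dvd S (Suc j)" using p_pos by simp
    moreover have "[S (Suc j) = S 1] (mod p)" using compat_1[OF assms(1)] by simp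
    ultimately have "p dvd S 1" using cong_dvd_iff by blast
    then show False using assms(2) by simp
  qed
  fix M assume "k' \<le> M"
  show "eqv (den M (k', red (\<lambda>n. p ^ j * S n))) (\<lambda>n. p ^ (M - k' + j) * S n)"
    unfolding eqv_def den_def
  proof
    fix n
    have "[red (\<lambda>n. p ^ j * S n) n = p ^ j * S n] (mod p ^ n)" by (simp add: red_def cong_def)
    then have "[p ^ (M - k') * red (\<lambda>n. p ^ j * S n) n = p ^ (M - k') * (p ^ j * S n)] (mod p ^ n)"
      by (rule cong_mult[OF cong_refl])
    then show "[p ^ (M - fst (k', red (\<lambda>n. p ^ j * S n))) * snd (k', red (\<lambda>n. p ^ j * S n)) n
        = p ^ (M - k' + j) * S n] (mod p ^ n)" by (simp add: power_add mult.assoc)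
  qed
qed

definition ulike :: "qp \<Rightarrow> bool" where
  "ulike u \<longleftrightarrow> u \<in> Qp p \<and> (\<exists>M i S. fst u \<le> M \<and> compat S \<and> \<not> p dvd S 1 \<and> eqv (den M u) (\<lambda>n. p ^ i * S n))"

lemma mkq_ulike: assumes "compat S" "\<not> p dvd S 1" "k' = 0 \<or> j = 0"
  shows "ulike (k', red (\<lambda>n. p ^ j * S n))"
  using mkq[OF assms] assms unfolding ulike_def by fastforce

lemma unit_cancel: assumes "compat S" "\<not> p dvd S 1" "eqv (\<lambda>n. S n * T n) (\<lambda>n. 0)"
  shows "eqv T (\<lambda>n. 0)"
  unfolding eqv_def
proof
  fix n
  show "[T n = 0] (mod p ^ n)"
  proof (cases "n = 0")
    case True then show ?thesis by simp
  next
    case False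
    have "[S n = S 1] (mod p)" using compat_1[OF assms(1)] False by simp
    then have "\<not> p dvd S n" using assms(2) cong_dvd_iff by blast
    then have "coprime p (S n)" by (rule prime_imp_coprime[OF pr])
    then have "coprime (S n) p" by (rule coprime_commute[THEN iffD1])
    then have cp: "coprime (p ^ n) (S n)" by (simp add: coprime_commute)
    have "[S n * T n = 0] (mod p ^ n)" using assms(3) by (simp add: eqv_def)
    then have "p ^ n dvd S n * T n" by (simp add: cong_0_iff)
    then have "p ^ n dvd T n" using coprime_dvd_mult_right_iff[OF cp] by blast
    then show ?thesis by (simp add: cong_0_iff)
  qed
qed

lemma mult_nz: assumes "ulike u" "t \<in> Qp p" "t \<noteq> qp_zero"
  shows "qp_mult p u t \<in> Qp p \<and> qp_mult p u t \<noteq> qp_zero"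
proof -
  obtain M i S where u: "u \<in> Qp p" "fst u \<le> M" "compat S" "\<not> p dvd S 1" "eqv (den M u) (\<lambda>n. p ^ i * S n)"
    using assms(1) unfolding ulike_def by blast
  define L where "L = fst t"
  note D = den_mult'[OF u(1) assms(2) u(2) _ u(5) eqv_refl[of "den L t"]]
  have D1: "qp_mult p u t \<in> Qp p" using D L_def by simp
  have D2: "eqv (den (M + L) (qp_mult p u t)) (\<lambda>n. p ^ i * S n * den L t n)" using D L_def by simp
  moreover have "qp_mult p u t \<noteq> qp_zero"
  proof
    assume z: "qp_mult p u t = qp_zero"
    have "den (M + L) qp_zero = (\<lambda>n. 0)" using den_zero by blast
    then have "eqv (\<lambda>n. p ^ i * S n * den L t n) (\<lambda>n. 0)" using D2 z by (metis eqv_sym)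
    then have "eqv (\<lambda>n. p ^ i * (S n * den L t n)) (\<lambda>n. p ^ i * 0)" by (simp add: mult.assoc)
    then have "eqv (\<lambda>n. S n * den L t n) (\<lambda>n. 0)"
      by (rule eqv_cancel[OF compat_mult[OF u(3) den_compat[OF assms(2)]] compat_const])
    then have "eqv (den L t) (\<lambda>n. 0)" by (rule unit_cancel[OF u(3,4)])
    then have e0: "eqv (den L t) (den L qp_zero)" using den_zero by simp
    have "t = qp_zero"
      by (rule qp_eq[of t qp_zero L]) (use assms(2) den_zero L_def e0 in auto)
    then show False using assms(3) by simp
  qed
  ultimately show ?thesis using D1 by blast
qed

lemma ac4: assumes "a \<in> Qp p" "c \<in> Qp p" "t \<in> Qp p"
  shows "qp_mult p (qp_mult p c (qp_mult p a a)) (qp_mult p t t)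
       = qp_mult p c (qp_mult p (qp_mult p a t) (qp_mult p a t))"
proof -
  define Na where "Na = fst a"
  define Nc where "Nc = fst c"
  define Nt where "Nt = fst t"
  define N where "N = Nc + 2 * Na + 2 * Nt"
  note aa = den_mult3[OF assms(1) assms(1) _ _ refl eqv_refl eqv_refl, of Na Na, simplified Na_def, folded Na_def]
  note caa = den_mult3[OF assms(2) aa[THEN conjunct1] _ aa[THEN conjunct2, THEN conjunct1] _ eqv_refl aa[THEN conjunct2, THEN conjunct2], of Nc "Nc + (Na + Na)", simplified Nc_def, folded Nc_def]
  note tt = den_mult3[OF assms(3) assms(3) _ _ refl eqv_refl eqv_refl, of Nt Nt, simplified Nt_def, folded Nt_def]
  note L = den_mult3[OF caa[THEN conjunct1] tt[THEN conjunct1] caa[THEN conjunct2, THEN conjunct1] tt[THEN conjunct2, THEN conjunct1] _ caa[THEN conjunct2, THEN conjunct2] tt[THEN conjunct2, THEN conjunct2], of N]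
  note at = den_mult3[OF assms(1) assms(3) _ _ refl eqv_refl eqv_refl, of Na Nt, simplified Na_def Nt_def, folded Na_def Nt_def]
  note atat = den_mult3[OF at[THEN conjunct1] at[THEN conjunct1] at[THEN conjunct2, THEN conjunct1] at[THEN conjunct2, THEN conjunct1] refl at[THEN conjunct2, THEN conjunct2] at[THEN conjunct2, THEN conjunct2]]
  note R = den_mult3[OF assms(2) atat[THEN conjunct1] _ atat[THEN conjunct2, THEN conjunct1] _ eqv_refl atat[THEN conjunct2, THEN conjunct2], of Nc N, simplified Nc_def, folded Nc_def]
  have L': "qp_mult p (qp_mult p c (qp_mult p a a)) (qp_mult p t t) \<in> Qp p \<and>
    fst (qp_mult p (qp_mult p c (qp_mult p a a)) (qp_mult p t t)) \<le> N \<and>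
    eqv (den N (qp_mult p (qp_mult p c (qp_mult p a a)) (qp_mult p t t)))
      (\<lambda>n. den Nc c n * (den Na a n * den Na a n) * (den Nt t n * den Nt t n))"
    using L N_def by simp
  have R': "qp_mult p c (qp_mult p (qp_mult p a t) (qp_mult p a t)) \<in> Qp p \<and>
    fst (qp_mult p c (qp_mult p (qp_mult p a t) (qp_mult p a t))) \<le> N \<and>
    eqv (den N (qp_mult p c (qp_mult p (qp_mult p a t) (qp_mult p a t))))
      (\<lambda>n. den Nc c n * ((den Na a n * den Nt t n) * (den Na a n * den Nt t n)))"
    using R N_def by simp
  have eq: "(\<lambda>n. den Nc c n * (den Na a n * den Na a n) * (den Nt t n * den Nt t n))
    = (\<lambda>n. den Nc c n * ((den Na a n * den Nt t n) * (den Na a n * den Nt t n)))"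
    by (simp add: fun_eq_iff mult_ac)
  show ?thesis
    by (rule qp_eq[of _ _ N]) (use L' R' eq in \<open>auto intro: eqv_trans eqv_sym\<close>)
qed

lemma sqclass_sub: assumes "c \<in> Qp p" "ulike t0" "x = qp_mult p c (qp_mult p t0 t0)"
  shows "sqclass p x \<subseteq> sqclass p c"
proof
  fix z assume "z \<in> sqclass p x"
  then obtain t where t: "t \<in> Qp p" "t \<noteq> qp_zero" "z = qp_mult p x (qp_mult p t t)"
    unfolding sqclass_def by blast
  have t0: "t0 \<in> Qp p" using assms(2) ulike_def by blast
  note m = mult_nz[OF assms(2) t(1,2)]
  have "z = qp_mult p c (qp_mult p (qp_mult p t0 t) (qp_mult p t0 t))"
    using t(3) assms(3) ac4[OF t0 assms(1) t(1)] by simp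
  then show "z \<in> sqclass p c" unfolding sqclass_def using m by blast
qed

end


context pad begin

definition dtr :: "nat \<Rightarrow> qp \<Rightarrow> (nat \<Rightarrow> int) \<Rightarrow> bool" where
  "dtr N x X \<longleftrightarrow> x \<in> Qp p \<and> fst x \<le> N \<and> eqv (den N x) X"

lemma dtr_self: "x \<in> Qp p \<Longrightarrow> fst x \<le> N \<Longrightarrow> dtr N x (den N x)"
  by (simp add: dtr_def)

lemma dm: assumes "dtr N1 x X" "dtr N2 y Y" "N1 + N2 = N3" shows "dtr N3 (qp_mult p x y) (\<lambda>n. X n * Y n)"
proof -
  have a: "x \<in> Qp p" "fst x \<le> N1" "eqv (den N1 x) X" using assms(1) unfolding dtr_def by auto
  have b: "y \<in> Qp p" "fst y \<le> N2" "eqv (den N2 y) Y" using assms(2) unfolding dtr_def by auto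
  show ?thesis unfolding dtr_def using den_mult3[OF a(1) b(1) a(2) b(2) assms(3) a(3) b(3)] .
qed

lemma da: assumes "dtr N x X" "dtr N y Y" shows "dtr N (qp_add p x y) (\<lambda>n. X n + Y n)"
proof -
  have a: "x \<in> Qp p" "fst x \<le> N" "eqv (den N x) X" using assms(1) unfolding dtr_def by auto
  have b: "y \<in> Qp p" "fst y \<le> N" "eqv (den N y) Y" using assms(2) unfolding dtr_def by auto
  show ?thesis unfolding dtr_def using den_add'[OF a(1) b(1) a(2) b(2) a(3) b(3)] .
qed

lemma di: "dtr N (qp_of_int p a) (\<lambda>n. p ^ N * a)"
  unfolding dtr_def using den_of_int by simp

lemma di0: "dtr 0 (qp_of_int p a) (\<lambda>n. a)"
  using di[of 0 a] by simp

lemma dz: "dtr N qp_zero (\<lambda>n. 0)"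
  unfolding dtr_def using den_zero by simp

lemma dup: assumes "dtr N x X" "N \<le> M" shows "dtr M x (\<lambda>n. p ^ (M - N) * X n)"
proof -
  have a: "x \<in> Qp p" "fst x \<le> N" "eqv (den N x) X" using assms(1) unfolding dtr_def by auto
  show ?thesis unfolding dtr_def using den_up[OF a(2) assms(2) a(3)] a(1,2) assms(2) by simp
qed

lemma deqv: "dtr N x X \<Longrightarrow> eqv X X' \<Longrightarrow> dtr N x X'"
  unfolding dtr_def by (blast intro: eqv_trans)

lemma deq: "dtr N x X \<Longrightarrow> X = X' \<Longrightarrow> dtr N x X'"
  by simp

lemma dtr_unique: "dtr N x X \<Longrightarrow> dtr N x X' \<Longrightarrow> eqv X X'"
  unfolding dtr_def by (blast intro: eqv_trans eqv_sym)

lemma dtr_eq: assumes "dtr N x X" "dtr N y Y" "eqv X Y" shows "x = y"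
proof -
  have a: "x \<in> Qp p" "fst x \<le> N" "eqv (den N x) X" using assms(1) unfolding dtr_def by auto
  have b: "y \<in> Qp p" "fst y \<le> N" "eqv (den N y) Y" using assms(2) unfolding dtr_def by auto
  have "eqv (den N x) (den N y)" using eqv_trans[OF a(3) eqv_trans[OF assms(3) eqv_sym[OF b(3)]]] .
  then show ?thesis by (rule qp_eq[OF a(1) b(1) a(2) b(2)])
qed

lemma dtr_Qp: "dtr N x X \<Longrightarrow> x \<in> Qp p"
  by (simp add: dtr_def)

lemma dtr_compat: "dtr N x X \<Longrightarrow> compat X"
proof -
  assume a: "dtr N x X"
  then have c: "compat (den N x)" using den_compat dtr_def by blast
  have e: "eqv (den N x) X" using a dtr_def by blast
  show "compat X" unfolding compat_def
  proof
    fix n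
    have "[den N x (Suc n) = X (Suc n)] (mod p ^ Suc n)" using e unfolding eqv_def by blast
    then have "[X (Suc n) = den N x (Suc n)] (mod p ^ Suc n)" by (rule cong_sym)
    then have "[X (Suc n) = den N x (Suc n)] (mod p ^ n)"
      by (rule cong_dvd_modulus) (rule le_imp_power_dvd, simp)
    also have "[den N x (Suc n) = den N x n] (mod p ^ n)" using c by (simp add: compat_def)
    also have "[den N x n = X n] (mod p ^ n)" using e by (simp add: eqv_def cong_sym)
    finally show "[X (Suc n) = X n] (mod p ^ n)" .
  qed
qed

lemma eqv_zero_prod: "eqv F (\<lambda>n. c) \<Longrightarrow> eqv (\<lambda>n. G n * (F n - c)) (\<lambda>n. 0)"
  unfolding eqv_def
proof
  fix n assume "\<forall>n. [F n = c] (mod p ^ n)"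
  then have "[F n = c] (mod p ^ n)" by blast
  then have "[F n - c = c - c] (mod p ^ n)" by (rule cong_diff) (rule cong_refl)
  then have "[G n * (F n - c) = G n * 0] (mod p ^ n)" by (intro cong_mult cong_refl) simp
  then show "[G n * (F n - c) = 0] (mod p ^ n)" by simp
qed

lemma eqv_eq: "F = G \<Longrightarrow> eqv F G" by simp

lemma on_curve0: assumes "dtr 0 x X" "eqv (\<lambda>n. X n * (X n * X n) + (a * (X n * X n) + b * X n)) (\<lambda>n. 0)"
  shows "Some (x, qp_zero) \<in> qp_points p a b"
proof -
  have L: "dtr 0 (qp_mult p qp_zero qp_zero) (\<lambda>n. 0 * 0)" using dm[OF dz[of 0] dz[of 0], of 0] by simp
  have xx: "dtr 0 (qp_mult p x x) (\<lambda>n. X n * X n)" using dm[OF assms(1) assms(1)] by simp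
  have R: "dtr 0 (qp_add p (qp_mult p x (qp_mult p x x))
            (qp_add p (qp_mult p (qp_of_int p a) (qp_mult p x x)) (qp_mult p (qp_of_int p b) x)))
         (\<lambda>n. X n * (X n * X n) + (a * (X n * X n) + b * X n))"
    by (intro da dm[OF assms(1) xx] dm[OF di0 xx] dm[OF di0 assms(1)]) simp_all
  have "qp_mult p qp_zero qp_zero = qp_add p (qp_mult p x (qp_mult p x x))
            (qp_add p (qp_mult p (qp_of_int p a) (qp_mult p x x)) (qp_mult p (qp_of_int p b) x))"
    by (rule dtr_eq[OF L R]) (use assms(2) eqv_sym in simp)
  moreover have "x \<in> Qp p" using assms(1) dtr_Qp by blast
  moreover have "qp_zero \<in> Qp p" using den_zero by blast
  ultimately show ?thesis unfolding qp_points_def by blast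
qed

lemma curve_star: assumes "x \<in> Qp p" "y \<in> Qp p"
  "qp_mult p y y = qp_add p (qp_mult p x (qp_mult p x x))
            (qp_add p (qp_mult p (qp_of_int p a) (qp_mult p x x)) (qp_mult p (qp_of_int p b) x))"
  "N = fst x + fst y"
  shows "eqv (\<lambda>n. p ^ N * (den N y n * den N y n))
     (\<lambda>n. den N x n * (den N x n * den N x n) + (p ^ N * a * (den N x n * den N x n) + p ^ (N + N) * b * den N x n))"
proof -
  have tx: "dtr N x (den N x)" using assms by (intro dtr_self) auto
  have ty: "dtr N y (den N y)" using assms by (intro dtr_self) auto
  have yy: "dtr (N + N) (qp_mult p y y) (\<lambda>n. den N y n * den N y n)" by (rule dm[OF ty ty refl])
  have L: "dtr (N + N + N) (qp_mult p y y) (\<lambda>n. p ^ N * (den N y n * den N y n))"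
    using dup[OF yy, of "N + N + N"] by simp
  have xx: "dtr (N + N) (qp_mult p x x) (\<lambda>n. den N x n * den N x n)" by (rule dm[OF tx tx refl])
  have R: "dtr (N + N + N) (qp_add p (qp_mult p x (qp_mult p x x))
            (qp_add p (qp_mult p (qp_of_int p a) (qp_mult p x x)) (qp_mult p (qp_of_int p b) x)))
     (\<lambda>n. den N x n * (den N x n * den N x n) + (p ^ N * a * (den N x n * den N x n) + p ^ (N + N) * b * den N x n))"
    by (intro da dm[OF tx xx] dm[OF di xx] dm[OF di tx]) simp_all
  show ?thesis using dtr_unique[OF L] R assms(3) by simp
qed

lemma finish: assumes "dtr N x X" "eqv X (\<lambda>n. p ^ v * U n)"
  "dtr 0 c (\<lambda>n. p ^ g * Cu n)" "compat S" "\<not> p dvd S 1" "eqv (\<lambda>n. Cu n * S n ^ 2) U"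
  "k' = 0 \<or> j = 0" "2 * k' \<le> N" "N - 2 * k' + g + 2 * j = v"
  shows "x = qp_mult p c (qp_mult p (k', red (\<lambda>n. p ^ j * S n)) (k', red (\<lambda>n. p ^ j * S n)))
    \<and> ulike (k', red (\<lambda>n. p ^ j * S n))"
proof
  define t where "t = (k', red (\<lambda>n. p ^ j * S n))"
  note mk = mkq[OF assms(4,5,7)]
  have tt: "dtr k' t (\<lambda>n. p ^ j * S n)"
    unfolding dtr_def t_def using mk by auto
  have tt2: "dtr (k' + k') (qp_mult p t t) (\<lambda>n. p ^ j * S n * (p ^ j * S n))" by (rule dm[OF tt tt refl])
  have ctt: "dtr (k' + k') (qp_mult p c (qp_mult p t t)) (\<lambda>n. p ^ g * Cu n * (p ^ j * S n * (p ^ j * S n)))"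
    by (rule dm[OF assms(3) tt2]) simp
  have R: "dtr N (qp_mult p c (qp_mult p t t)) (\<lambda>n. p ^ (N - (k' + k')) * (p ^ g * Cu n * (p ^ j * S n * (p ^ j * S n))))"
    by (rule dup[OF ctt]) (use assms(8) in simp)
  have e1: "(\<lambda>n. p ^ (N - (k' + k')) * (p ^ g * Cu n * (p ^ j * S n * (p ^ j * S n))))
     = (\<lambda>n. p ^ v * (Cu n * S n ^ 2))"
  proof
    fix n
    have "v = N - (k' + k') + g + j + j" using assms(9) by simp
    then have "p ^ v = p ^ (N - (k' + k')) * p ^ g * p ^ j * p ^ j"
      by (simp add: power_add)
    then show "p ^ (N - (k' + k')) * (p ^ g * Cu n * (p ^ j * S n * (p ^ j * S n))) = p ^ v * (Cu n * S n ^ 2)"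
      by (simp add: power2_eq_square mult_ac)
  qed
  have "eqv (\<lambda>n. p ^ v * (Cu n * S n ^ 2)) (\<lambda>n. p ^ v * U n)" by (rule eqv_smult[OF assms(6)])
  then have R': "dtr N (qp_mult p c (qp_mult p t t)) (\<lambda>n. p ^ v * U n)"
    using R e1 deqv by simp
  show "x = qp_mult p c (qp_mult p (k', red (\<lambda>n. p ^ j * S n)) (k', red (\<lambda>n. p ^ j * S n)))"
    using dtr_eq[OF assms(1) R' assms(2)] t_def by simp
  show "ulike (k', red (\<lambda>n. p ^ j * S n))" by (rule mkq_ulike[OF assms(4,5,7)])
qed

end


context pad begin

lemma gen_inv: assumes "\<not> p dvd m" "[c * r ^ 2 = u * m ^ 2] (mod p)" shows "\<exists>r'. [c * r' ^ 2 = u] (mod p)"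
proof -
  have "coprime p m" by (rule prime_imp_coprime[OF pr assms(1)])
  then have "coprime m p" by (rule coprime_commute[THEN iffD1])
  then obtain i where i: "[m * i = 1] (mod p)" using cong_solve_coprime_int by blast
  have "[c * r ^ 2 * i ^ 2 = u * m ^ 2 * i ^ 2] (mod p)" using assms(2) by (rule cong_mult) (rule cong_refl)
  moreover have "c * r ^ 2 * i ^ 2 = c * (r * i) ^ 2" by (simp add: power_mult_distrib)
  moreover have "u * m ^ 2 * i ^ 2 = u * (m * i) ^ 2" by (simp add: power_mult_distrib)
  moreover have "[u * (m * i) ^ 2 = u * 1 ^ 2] (mod p)" using i by (intro cong_mult cong_refl cong_pow)
  ultimately have "[c * (r * i) ^ 2 = u] (mod p)" by (metis cong_trans mult_1_right power_one)
  then show ?thesis by blast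
qed

lemma cong_poly: "[z = z'] (mod m) \<Longrightarrow>
  [z * (z * z) + (c1 * (z * z) + c2 * z) = z' * (z' * z') + (c1 * (z' * z') + c2 * z')] (mod m)"
  by (intro cong_add cong_mult cong_refl) auto

lemma ndvd_unit_pow: assumes "compat U" "\<not> p dvd U 1" "1 \<le> n" shows "\<not> p dvd U n"
proof
  assume "p dvd U n"
  moreover have "[U n = U 1] (mod p)" using compat_1[OF assms(1,3)] .
  ultimately have "p dvd U 1" using cong_dvd_iff by blast
  then show False using assms(2) by simp
qed

lemma ndvd_add: "\<not> p dvd a \<Longrightarrow> \<not> p dvd (a + p * r)"
  by (simp add: dvd_add_left_iff)

lemma ndvd_cube: "\<not> p dvd u \<Longrightarrow> \<not> p dvd u * (u * u)"
  using pr by (simp add: prime_dvd_mult_iff)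

lemma cong_addp: "[a + p * r = a] (mod p)"
  by (simp add: cong_iff_dvd_diff)

end


context pad begin

lemma main_sub:
  assumes p2: "\<not> p dvd 2" and nB: "\<not> p dvd B" and nC: "\<not> p dvd (A^2 - 4*B)"
    and dd: "d = p * d0" and nd0: "\<not> p dvd d0"
    and xQ: "x \<in> Qp p" and yQ: "y \<in> Qp p" and xnz: "x \<noteq> qp_zero"
    and eqn: "qp_mult p y y = qp_add p (qp_mult p x (qp_mult p x x))
            (qp_add p (qp_mult p (qp_of_int p (-2*d*A)) (qp_mult p x x)) (qp_mult p (qp_of_int p (d^2*(A^2-4*B))) x))"
  shows "(\<exists>t0. ulike t0 \<and> x = qp_mult p (qp_of_int p 1) (qp_mult p t0 t0))
       \<or> (\<exists>t0. ulike t0 \<and> x = qp_mult p (qp_of_int p (16*B^2*(A^2-4*B))) (qp_mult p t0 t0))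
       \<or> (\<exists>N U. dtr N x (\<lambda>n. p ^ (N + 1) * U n) \<and> compat U \<and> \<not> p dvd U 1
              \<and> p dvd (U 1 ^ 2 - 2 * d0 * A * U 1 + d0 ^ 2 * (A^2 - 4*B)))"
proof -
  define C0 where "C0 = A^2 - 4*B"
  define N where "N = fst x + fst y"
  define X where "X = den N x"
  define Y where "Y = den N y"
  have star: "eqv (\<lambda>n. p ^ N * (Y n * Y n))
     (\<lambda>n. X n * (X n * X n) + (p ^ N * (-2*d*A) * (X n * X n) + p ^ (N + N) * (d^2*(A^2-4*B)) * X n))"
    unfolding X_def Y_def by (rule curve_star[OF xQ yQ eqn N_def])
  obtain k f where x: "x = (k, f)" by (cases x)
  have fc: "f \<in> zp_carrier p" using xQ x by (simp add: Qp_def)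
  have fnz: "f \<noteq> zp_zero"
  proof
    assume f0: "f = zp_zero"
    show False
    proof (cases "k = 0")
      case True then show False using xnz x f0 by (simp add: qp_zero_def)
    next
      case False then have "f 1 \<noteq> 0" using xQ x by (simp add: Qp_def)
      then show False using f0 by (simp add: zp_zero_def)
    qed
  qed
  obtain v0 U where U: "U \<in> zp_carrier p" "\<not> p dvd U 1" "eqv f (\<lambda>n. p ^ v0 * U n)"
    using decomp[OF fc fnz] by blast
  have Uc: "compat U" using carrier_compat[OF U(1)] .
  have kN: "k \<le> N" using x N_def by simp
  define v where "v = N - k + v0"
  have XU: "eqv X (\<lambda>n. p ^ v * U n)"
  proof -
    have "eqv X (\<lambda>n. p ^ (N - k) * f n)" by (simp add: X_def den_def x)
    moreover have "eqv (\<lambda>n. p ^ (N - k) * f n) (\<lambda>n. p ^ (N - k) * (p ^ v0 * U n))"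
      by (rule eqv_smult[OF U(3)])
    moreover have "(\<lambda>n. p ^ (N - k) * (p ^ v0 * U n)) = (\<lambda>n. p ^ v * U n)"
      by (simp add: v_def power_add mult.assoc)
    ultimately show ?thesis by (metis eqv_trans)
  qed
  have dX: "dtr N x (\<lambda>n. p ^ v * U n)"
    by (rule deqv[OF _ XU]) (use xQ in \<open>simp add: dtr_def N_def X_def\<close>)
  have H: "[p ^ N * (Y n * Y n) = (p ^ v * U n) * ((p ^ v * U n) * (p ^ v * U n))
       + (p ^ N * (-2*d*A) * ((p ^ v * U n) * (p ^ v * U n)) + p ^ (N + N) * (d^2*(A^2-4*B)) * (p ^ v * U n))] (mod p ^ n)" for n
  proof -
    have "[X n = p ^ v * U n] (mod p ^ n)" using XU by (simp add: eqv_def)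
    then have "[X n * (X n * X n) + (p ^ N * (-2*d*A) * (X n * X n) + p ^ (N + N) * (d^2*(A^2-4*B)) * X n)
       = (p ^ v * U n) * ((p ^ v * U n) * (p ^ v * U n))
       + (p ^ N * (-2*d*A) * ((p ^ v * U n) * (p ^ v * U n)) + p ^ (N + N) * (d^2*(A^2-4*B)) * (p ^ v * U n))] (mod p ^ n)"
      by (rule cong_poly)
    moreover have "[p ^ N * (Y n * Y n) = X n * (X n * X n) + (p ^ N * (-2*d*A) * (X n * X n) + p ^ (N + N) * (d^2*(A^2-4*B)) * X n)] (mod p ^ n)"
      using star by (simp add: eqv_def)
    ultimately show ?thesis by (rule cong_trans[rotated])
  qed
  have Un: "\<not> p dvd U n" if "1 \<le> n" for n using ndvd_unit_pow[OF Uc U(2) that] .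
  show ?thesis
  proof (cases "v \<le> N")
    case True
    define m where "m = N - v"
    have Nvm: "N = v + m" using True m_def by simp
    define n0 where "n0 = v + v + v + 1"
    define u where "u = U n0"
    define W where "W = u * (u * u) + p * (p ^ m * (-2*d0*A) * (u * u) + p ^ (m + m) * p * d0^2 * C0 * u)"
    have id: "(p ^ v * u) * ((p ^ v * u) * (p ^ v * u))
       + (p ^ N * (-2*d*A) * ((p ^ v * u) * (p ^ v * u)) + p ^ (N + N) * (d^2*(A^2-4*B)) * (p ^ v * u))
       = p ^ (v + v + v) * W"
      unfolding W_def Nvm dd C0_def by (simp add: power_add power2_eq_square algebra_simps)
    have c1: "[p ^ N * Y n0 ^ 2 = p ^ (v + v + v) * W] (mod p ^ n0)"
      using H[of n0] unfolding id u_def[symmetric] by (simp only: power2_eq_square)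
    have un: "\<not> p dvd u" using Un[of n0] n0_def u_def by simp
    have Wn: "\<not> p dvd W" unfolding W_def by (rule ndvd_add[OF ndvd_cube[OF un]])
    have T: "N \<le> v + v + v \<and> even (v + v + v - N) \<and> (\<exists>r. [r ^ 2 = W] (mod p))"
      by (rule T3int[OF Wn _ c1]) (simp add: n0_def)
    then obtain r where r: "[r ^ 2 = W] (mod p)" by blast
    have "[W = u * (u * u)] (mod p)" unfolding W_def by (rule cong_addp)
    moreover have "[u = U 1] (mod p)" using compat_1[OF Uc] n0_def u_def by simp
    then have "[u * (u * u) = U 1 * U 1 ^ 2] (mod p)" by (simp add: power2_eq_square cong_mult)
    ultimately have "[1 * r ^ 2 = U 1 * U 1 ^ 2] (mod p)" using r by (metis cong_trans mult_1)
    then obtain r' where r': "[1 * r' ^ 2 = U 1] (mod p)" using gen_inv[OF U(2)] by blast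
    have np1: "\<not> p dvd 1"
    proof
      assume "p dvd 1"
      then have "p \<le> 1" by (rule zdvd_imp_le) simp
      then show False using p_gt1 by simp
    qed
    obtain S where S: "compat S" "\<not> p dvd S 1" "eqv (\<lambda>n. 1 * S n ^ 2) U"
      using hensel[OF p2 compat_const Uc np1 U(2) r'] by blast
    have "even m" using T Nvm by auto
    then obtain h where h: "m = 2 * h" by blast
    have c0: "dtr 0 (qp_of_int p 1) (\<lambda>n. p ^ 0 * 1)" using di0[of 1] by simp
    have F: "x = qp_mult p (qp_of_int p 1) (qp_mult p (h, red (\<lambda>n. p ^ 0 * S n)) (h, red (\<lambda>n. p ^ 0 * S n)))
      \<and> ulike (h, red (\<lambda>n. p ^ 0 * S n))"
      by (rule finish[OF dX eqv_refl c0 S(1,2)]) (use S(3) Nvm h in auto)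
    then show ?thesis by blast
  next
    case False
    show ?thesis
    proof (cases "v = N + 1")
      case True
      define n0 where "n0 = N + N + N + 4"
      define u where "u = U n0"
      define Q where "Q = u * (u ^ 2 - 2 * d0 * A * u + d0 ^ 2 * C0)"
      have id: "(p ^ v * u) * ((p ^ v * u) * (p ^ v * u))
         + (p ^ N * (-2*d*A) * ((p ^ v * u) * (p ^ v * u)) + p ^ (N + N) * (d^2*(A^2-4*B)) * (p ^ v * u))
         = (p ^ N * p ^ N * p ^ N * (p * p * p)) * Q"
        unfolding Q_def True dd C0_def by (simp add: power_add power2_eq_square algebra_simps)
      have pw: "p ^ (N + N + N + 3) = p ^ N * p ^ N * p ^ N * (p * p * p)"
        by (simp only: power_add power3_eq_cube)
      have c1: "[p ^ N * Y n0 ^ 2 = p ^ (N + N + N + 3) * Q] (mod p ^ n0)"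
        using H[of n0] unfolding pw id u_def[symmetric] by (simp only: power2_eq_square)
      have un: "\<not> p dvd u" using Un[of n0] n0_def u_def by simp
      have "p dvd Q"
      proof (rule ccontr)
        assume "\<not> p dvd Q"
        from T3int[OF this _ c1] have "even (N + N + N + 3 - N)" by (simp add: n0_def)
        then show False by simp
      qed
      then have q: "p dvd (u ^ 2 - 2 * d0 * A * u + d0 ^ 2 * C0)"
        using un pr unfolding Q_def by (simp add: prime_dvd_mult_iff)
      have "[u = U 1] (mod p)" using compat_1[OF Uc] n0_def u_def by simp
      then have "[u ^ 2 - 2 * d0 * A * u + d0 ^ 2 * C0 = U 1 ^ 2 - 2 * d0 * A * U 1 + d0 ^ 2 * C0] (mod p)"
        by (intro cong_add cong_diff cong_mult cong_pow cong_refl)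
      then have "p dvd (U 1 ^ 2 - 2 * d0 * A * U 1 + d0 ^ 2 * C0)" using q cong_dvd_iff by blast
      moreover have "dtr N x (\<lambda>n. p ^ (N + 1) * U n)" using dX True by simp
      ultimately show ?thesis using Uc U(2) C0_def by blast
    next
      case False2: False
      then have vN: "N + 2 \<le> v" using False by simp
      define m where "m = v - N - 2"
      have vm: "v = N + 2 + m" using vN m_def by simp
      define n0 where "n0 = v + N + N + 3"
      define u where "u = U n0"
      define W where "W = u * d0^2 * C0 + p * (u * (p ^ (m + m + 1) * (u * u) - 2 * p ^ m * d0 * A * u))"
      have id: "(p ^ v * u) * ((p ^ v * u) * (p ^ v * u))
         + (p ^ N * (-2*d*A) * ((p ^ v * u) * (p ^ v * u)) + p ^ (N + N) * (d^2*(A^2-4*B)) * (p ^ v * u))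
         = p ^ (v + N + N + 2) * W"
        unfolding W_def vm dd C0_def by (simp add: power_add power2_eq_square algebra_simps)
      have c1: "[p ^ N * Y n0 ^ 2 = p ^ (v + N + N + 2) * W] (mod p ^ n0)"
        using H[of n0] unfolding id u_def[symmetric] by (simp only: power2_eq_square)
      have un: "\<not> p dvd u" using Un[of n0] n0_def u_def by simp
      have "\<not> p dvd u * d0^2 * C0" using un nd0 nC pr unfolding C0_def
        by (simp add: prime_dvd_mult_iff prime_dvd_power_iff)
      then have Wn: "\<not> p dvd W" unfolding W_def by (rule ndvd_add)
      have T: "N \<le> v + N + N + 2 \<and> even (v + N + N + 2 - N) \<and> (\<exists>r. [r ^ 2 = W] (mod p))"
        by (rule T3int[OF Wn _ c1]) (simp add: n0_def)
      then obtain r where r: "[r ^ 2 = W] (mod p)" by blast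
      have "[W = u * d0^2 * C0] (mod p)" unfolding W_def by (rule cong_addp)
      moreover have "[u = U 1] (mod p)" using compat_1[OF Uc] n0_def u_def by simp
      then have "[u * d0^2 * C0 = U 1 * d0^2 * C0] (mod p)" by (intro cong_mult cong_refl)
      ultimately have "[r ^ 2 = U 1 * d0^2 * C0] (mod p)" using r by (metis cong_trans)
      then have cr: "[16*B^2*C0 * r ^ 2 = 16*B^2*C0 * (U 1 * d0^2 * C0)] (mod p)" by (rule cong_mult[OF cong_refl])
      have eq: "16*B^2*C0 * (U 1 * d0^2 * C0) = U 1 * (4 * B * d0 * C0) ^ 2"
        by (simp add: power2_eq_square algebra_simps)
      have rr: "[16*B^2*C0 * r ^ 2 = U 1 * (4 * B * d0 * C0) ^ 2] (mod p)" using cr by (simp only: eq)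
      have "\<not> p dvd 4 * B * d0 * C0"
      proof -
        have "\<not> p dvd 4" using p2 pr by (metis dvd_mult mult_2_right numeral_Bit0 prime_dvd_mult_iff)
        then show ?thesis using nB nd0 nC pr unfolding C0_def by (simp add: prime_dvd_mult_iff)
      qed
      then obtain r' where r': "[16*B^2*C0 * r' ^ 2 = U 1] (mod p)" using gen_inv rr by blast
      have "\<not> p dvd 16*B^2*C0"
      proof
        assume "p dvd 16*B^2*C0"
        then have "p dvd 16*B^2*C0 * r' ^ 2" by simp
        then have "p dvd U 1" using r' cong_dvd_iff by blast
        then show False using U(2) by simp
      qed
      then obtain S where S: "compat S" "\<not> p dvd S 1" "eqv (\<lambda>n. 16*B^2*C0 * S n ^ 2) U"
        using hensel[OF p2 compat_const Uc _ U(2), of "16*B^2*C0" r'] r' by auto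
      have "even m" using T vm by simp
      then obtain h where h: "m = 2 * h" by blast
      have c0: "dtr 0 (qp_of_int p (16*B^2*(A^2-4*B))) (\<lambda>n. p ^ 0 * (16*B^2*C0))"
        using di0[of "16*B^2*(A^2-4*B)"] C0_def by simp
      have F: "x = qp_mult p (qp_of_int p (16*B^2*(A^2-4*B))) (qp_mult p (0, red (\<lambda>n. p ^ (h + 1) * S n)) (0, red (\<lambda>n. p ^ (h + 1) * S n)))
        \<and> ulike (0, red (\<lambda>n. p ^ (h + 1) * S n))"
        by (rule finish[OF dX eqv_refl c0 S(1,2)]) (use S(3) vm h in auto)
      then show ?thesis by blast
    qed
  qed
qed

end



context pad begin

lemma pts_iff: "Some (x, y) \<in> qp_points p a b \<longleftrightarrow> x \<in> Qp p \<and> y \<in> Qp p \<and>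
   qp_mult p y y = qp_add p (qp_mult p x (qp_mult p x x))
            (qp_add p (qp_mult p (qp_of_int p a) (qp_mult p x x)) (qp_mult p (qp_of_int p b) x))"
  unfolding qp_points_def by (simp del: split_paired_Ex)

lemma none_pts: "None \<in> qp_points p a b"
  by (simp add: qp_points_def)

lemma zero_pts: "Some (qp_zero, qp_zero) \<in> qp_points p a b"
  by (rule on_curve0[OF dz]) simp

lemma qpi_Qp: "qp_of_int p a \<in> Qp p" using den_of_int by blast

lemma nz_from_dtr: assumes "dtr 0 e (\<lambda>n. p ^ 1 * G n)" "compat G" "\<not> p dvd G 1"
  shows "e \<noteq> qp_zero"
proof
  assume "e = qp_zero"
  then have "eqv (\<lambda>n. p ^ 1 * G n) (\<lambda>n. p ^ 1 * 0)" using dtr_unique[OF assms(1)] dz by simp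
  then have "eqv G (\<lambda>n. 0)" by (rule eqv_cancel[OF assms(2) compat_const])
  then have "[G 1 = 0] (mod p)" by (rule eqv_cong1)
  then show False using assms(3) by (simp add: cong_0_iff)
qed

lemma class_sub_W: assumes "Some (x, y) \<in> qp_points p a b" "x \<noteq> qp_zero"
  shows "sqclass p x \<subseteq> (\<Union>P \<in> qp_points p a b. sqclass p (kummer p A B P))"
proof -
  have "kummer p A B (Some (x, y)) = x" using assms(2) by (simp add: kummer_def)
  then show ?thesis using UN_upper[OF assms(1), of "\<lambda>P. sqclass p (kummer p A B P)"] by simp
qed

end

lemma int_facts:
  fixes A B s d0 u :: int
  shows "A^2 - 4*B = (A + 2*s) * (A - 2*s) + 4 * (s^2 - B)"
    and "u^2 - 2*d0*A*u + d0^2*(A^2 - 4*B) = (u - d0*(A+2*s)) * (u - d0*(A-2*s)) + 4*d0^2*(s^2 - B)"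
    and "u^2 - 2*d0*A*u + d0^2*(A^2 - 4*B) = (u - d0*A)^2 - B * (2*d0)^2"
  by (simp_all add: power2_eq_square algebra_simps)


theorem lemma3p1:
  fixes A B d p :: int
  assumes elliptic: "disc A B \<noteq> 0"
    and tors: "card (two_torsion_Q A B) = 2"
    and sqf: "squarefree d"
    and pr: "prime p"
    and pd: "p dvd d"
    and cop: "coprime p (2 * disc A B)"
  shows "(Legendre (disc (-2 * A) (A^2 - 4 * B)) p = -1 \<longrightarrow>
            W p A B d = sq_span1 p (qp_of_int p (disc A B)))
       \<and> (Legendre (disc (-2 * A) (A^2 - 4 * B)) p = 1 \<longrightarrow>
            (\<forall>s \<in> Qp p. qp_mult p s s = qp_of_int p B \<longrightarrow>
               W p A B d = sq_span2 p (qp_of_int p (disc A B))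
                 (qp_mult p (qp_of_int p d)
                    (qp_add p (qp_of_int p A) (qp_mult p (qp_of_int p 2) s)))))"
proof -
  interpret pad p by unfold_locales (rule pr)
  define C0 where "C0 = A^2 - 4*B"
  define D where "D = disc A B"
  define PS where "PS = qp_points p (-2 * d * A) (d^2 * (A^2 - 4 * B))"
  have Wdef: "W p A B d = (\<Union>P \<in> PS. sqclass p (kummer p A B P))"
    by (simp add: W_def PS_def)
  have Dd: "D = 16*B^2*C0" by (simp add: D_def disc_def C0_def)
  have n2D: "\<not> p dvd 2 * D"
  proof
    assume "p dvd 2 * D"
    then have "\<bar>p\<bar> = 1" using coprime_common_divisor_int[OF cop dvd_refl] D_def by simp
    then show False using p_gt1 by simp
  qed
  have p2: "\<not> p dvd 2" using n2D dvd_mult2 by blast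
  have nB: "\<not> p dvd B"
  proof
    assume "p dvd B"
    then have "p dvd B * (32*B*C0)" by (rule dvd_mult2)
    moreover have "B * (32*B*C0) = 2 * D" by (simp add: Dd power2_eq_square)
    ultimately show False using n2D by simp
  qed
  have nC: "\<not> p dvd C0"
  proof
    assume "p dvd C0"
    then have "p dvd C0 * (32*B^2)" by (rule dvd_mult2)
    moreover have "C0 * (32*B^2) = 2 * D" by (simp add: Dd)
    ultimately show False using n2D by simp
  qed
  obtain d0 where dd: "d = p * d0" using pd by blast
  have nd0: "\<not> p dvd d0"
  proof
    assume "p dvd d0"
    then obtain e where "d0 = p * e" by blast
    then have "p ^ 2 dvd d" using dd by (simp add: power2_eq_square)
    then have "p dvd 1" by (rule squarefreeD[OF sqf])
    then have "p \<le> 1" by (rule zdvd_imp_le) simp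
    then show False using p_gt1 by simp
  qed
  have pts: "Some (x, y) \<in> PS \<longleftrightarrow> x \<in> Qp p \<and> y \<in> Qp p \<and>
     qp_mult p y y = qp_add p (qp_mult p x (qp_mult p x x))
       (qp_add p (qp_mult p (qp_of_int p (-2 * d * A)) (qp_mult p x x)) (qp_mult p (qp_of_int p (d^2 * (A^2 - 4 * B))) x))"
    for x y unfolding PS_def by (rule pts_iff)
  have W1: "sqclass p (qp_of_int p 1) \<subseteq> W p A B d"
  proof -
    have "kummer p A B None = qp_of_int p 1" by (simp add: kummer_def)
    then show ?thesis unfolding Wdef using UN_upper[OF none_pts[of "-2 * d * A" "d^2 * (A^2 - 4 * B)", folded PS_def],
        of "\<lambda>P. sqclass p (kummer p A B P)"] by simp
  qed
  have W2: "sqclass p (qp_of_int p (disc A B)) \<subseteq> W p A B d"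
  proof -
    have "kummer p A B (Some (qp_zero, qp_zero)) = qp_of_int p (disc A B)" by (simp add: kummer_def)
    then show ?thesis unfolding Wdef using UN_upper[OF zero_pts[of "-2 * d * A" "d^2 * (A^2 - 4 * B)", folded PS_def],
        of "\<lambda>P. sqclass p (kummer p A B P)"] by simp
  qed
  have Wsub: "W p A B d \<subseteq> T"
    if T1: "sqclass p (qp_of_int p 1) \<subseteq> T" and T2: "sqclass p (qp_of_int p (disc A B)) \<subseteq> T"
    and T3: "\<And>x y. Some (x, y) \<in> PS \<Longrightarrow> x \<noteq> qp_zero \<Longrightarrow> sqclass p x \<subseteq> T" for T
  proof -
    have "sqclass p (kummer p A B P) \<subseteq> T" if P: "P \<in> PS" for P
    proof (cases P)
      case None then show ?thesis using T1 by (simp add: kummer_def)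
    next
      case (Some xy)
      obtain x y where xy: "xy = (x, y)" by (cases xy)
      show ?thesis
      proof (cases "x = qp_zero")
        case True then show ?thesis using T2 Some xy by (simp add: kummer_def)
      next
        case False
        then have "kummer p A B P = x" using Some xy by (simp add: kummer_def)
        then show ?thesis using T3[of x y] P Some xy False by simp
      qed
    qed
    then show ?thesis unfolding Wdef by blast
  qed
  have MS: "(\<exists>t0. ulike t0 \<and> x = qp_mult p (qp_of_int p 1) (qp_mult p t0 t0))
       \<or> (\<exists>t0. ulike t0 \<and> x = qp_mult p (qp_of_int p (disc A B)) (qp_mult p t0 t0))
       \<or> (\<exists>N U. dtr N x (\<lambda>n. p ^ (N + 1) * U n) \<and> compat U \<and> \<not> p dvd U 1
              \<and> p dvd (U 1 ^ 2 - 2 * d0 * A * U 1 + d0 ^ 2 * (A^2 - 4*B)))"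
    if "Some (x, y) \<in> PS" "x \<noteq> qp_zero" for x y
  proof -
    have h: "x \<in> Qp p" "y \<in> Qp p" "qp_mult p y y = qp_add p (qp_mult p x (qp_mult p x x))
       (qp_add p (qp_mult p (qp_of_int p (-2 * d * A)) (qp_mult p x x)) (qp_mult p (qp_of_int p (d^2 * (A^2 - 4 * B))) x))"
      using that(1) pts by auto
    show ?thesis using main_sub[OF p2 nB nC[unfolded C0_def] dd nd0 h(1,2) that(2) h(3)]
      by (simp add: disc_def)
  qed
  have S1: "sqclass p x \<subseteq> sqclass p (qp_of_int p 1)"
    if "ulike t0" "x = qp_mult p (qp_of_int p 1) (qp_mult p t0 t0)" for x t0
    by (rule sqclass_sub[OF qpi_Qp that])
  have S2: "sqclass p x \<subseteq> sqclass p (qp_of_int p (disc A B))"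
    if "ulike t0" "x = qp_mult p (qp_of_int p (disc A B)) (qp_mult p t0 t0)" for x t0
    by (rule sqclass_sub[OF qpi_Qp that])
  show ?thesis
  proof (intro conjI impI ballI)
    assume L: "Legendre (disc (-2 * A) (A^2 - 4 * B)) p = -1"
    have nQR: "\<not> QuadRes p B"
    proof
      assume "QuadRes p B"
      then obtain z where z: "[z^2 = B] (mod p)" unfolding QuadRes_def by blast
      have "[(16 * C0 * z)^2 = (16 * C0)^2 * B] (mod p)"
        using z by (simp add: power_mult_distrib cong_mult cong_refl)
      moreover have "(16 * C0)^2 * B = disc (-2 * A) (A^2 - 4 * B)"
        by (simp add: disc_def C0_def power2_eq_square algebra_simps)
      ultimately have "QuadRes p (disc (-2 * A) (A^2 - 4 * B))" unfolding QuadRes_def by auto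
      then have "Legendre (disc (-2 * A) (A^2 - 4 * B)) p \<noteq> -1" by (simp add: Legendre_def)
      then show False using L by simp
    qed
    show "W p A B d = sq_span1 p (qp_of_int p (disc A B))"
    proof
      show "sq_span1 p (qp_of_int p (disc A B)) \<subseteq> W p A B d"
        unfolding sq_span1_def using W1 W2 by blast
      show "W p A B d \<subseteq> sq_span1 p (qp_of_int p (disc A B))"
      proof (rule Wsub)
        show "sqclass p (qp_of_int p 1) \<subseteq> sq_span1 p (qp_of_int p (disc A B))"
          unfolding sq_span1_def by blast
        show "sqclass p (qp_of_int p (disc A B)) \<subseteq> sq_span1 p (qp_of_int p (disc A B))"
          unfolding sq_span1_def by blast
        fix x y assume xy: "Some (x, y) \<in> PS" "x \<noteq> qp_zero"
        show "sqclass p x \<subseteq> sq_span1 p (qp_of_int p (disc A B))"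
        proof -
          note M = MS[OF xy]
          show ?thesis
          proof (cases "\<exists>N U. dtr N x (\<lambda>n. p ^ (N + 1) * U n) \<and> compat U \<and> \<not> p dvd U 1
              \<and> p dvd (U 1 ^ 2 - 2 * d0 * A * U 1 + d0 ^ 2 * (A^2 - 4*B))")
            case True
            then obtain N U where U0: "dtr N x (\<lambda>n. p ^ (N + 1) * U n)" "compat U"
              and U: "\<not> p dvd U 1" "p dvd (U 1 ^ 2 - 2 * d0 * A * U 1 + d0 ^ 2 * (A^2 - 4*B))"
              by (elim exE conjE)
            have "p dvd (U 1 - d0 * A)^2 - B * (2 * d0)^2" using U(2) unfolding int_facts(3)[of "U 1" d0 A B] .
            then have "[1 * (U 1 - d0 * A)^2 = B * (2 * d0)^2] (mod p)" by (simp add: cong_iff_dvd_diff)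
            moreover have "\<not> p dvd 2 * d0" using p2 nd0 pr by (simp add: prime_dvd_mult_iff)
            ultimately obtain r where "[1 * r ^ 2 = B] (mod p)" using gen_inv by blast
            then have "QuadRes p B" unfolding QuadRes_def by auto
            then show ?thesis using nQR by simp
          next
            case False
            then show ?thesis using M S1 S2 unfolding sq_span1_def by blast
          qed
        qed
      qed
    qed
  next
    fix s assume L: "Legendre (disc (-2 * A) (A^2 - 4 * B)) p = 1" and sQ: "s \<in> Qp p"
      and ss: "qp_mult p s s = qp_of_int p B"
    show "W p A B d = sq_span2 p (qp_of_int p (disc A B))
                 (qp_mult p (qp_of_int p d) (qp_add p (qp_of_int p A) (qp_mult p (qp_of_int p 2) s)))"
    proof -
      define k where "k = fst s"
      define S where "S = snd s"
      have Sc: "S \<in> zp_carrier p" using sQ by (simp add: S_def Qp_iff)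
      have SC: "compat S" by (rule carrier_compat[OF Sc])
      have k0: "k = 0"
      proof (rule ccontr)
        assume "k \<noteq> 0"
        then have s1: "S 1 \<noteq> 0" using sQ by (simp add: Qp_iff k_def S_def)
        have ts: "dtr k s (den k s)" by (rule dtr_self[OF sQ]) (simp add: k_def)
        have "den k s = (\<lambda>n. S n)" by (simp add: den_def k_def S_def)
        then have ts': "dtr k s (\<lambda>n. S n)" using ts by simp
        have d1: "dtr (k + k) (qp_mult p s s) (\<lambda>n. S n * S n)" by (rule dm[OF ts' ts' refl])
        have d2: "dtr (k + k) (qp_mult p s s) (\<lambda>n. p ^ (k + k) * B)" using di[of "k + k" B] ss by simp
        have "eqv (\<lambda>n. S n * S n) (\<lambda>n. p ^ (k + k) * B)" by (rule dtr_unique[OF d1 d2])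
        then have "[S 1 * S 1 = p ^ (k + k) * B] (mod p)" by (rule eqv_cong1)
        moreover have "p dvd p ^ (k + k) * B" using \<open>k \<noteq> 0\<close> by (simp add: dvd_power)
        ultimately have "p dvd S 1 * S 1" using cong_dvd_iff by blast
        then have "p dvd S 1" using pr by (simp add: prime_dvd_mult_iff)
        moreover have "0 \<le> S 1" "S 1 < p" using carrier_range[OF Sc, of 1] by auto
        ultimately show False using s1 zdvd_imp_le by fastforce
      qed
      have ts: "dtr 0 s (\<lambda>n. S n)"
      proof -
        have "dtr 0 s (den 0 s)" by (rule dtr_self[OF sQ]) (simp add: k0[unfolded k_def])
        moreover have "den 0 s = (\<lambda>n. S n)" by (simp add: den_def S_def)
        ultimately show ?thesis by simp
      qed
      have SB: "eqv (\<lambda>n. S n * S n) (\<lambda>n. B)"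
      proof -
        have d1: "dtr 0 (qp_mult p s s) (\<lambda>n. S n * S n)" by (rule dm[OF ts ts]) simp
        have d2: "dtr 0 (qp_mult p s s) (\<lambda>n. B)" using di0[of B] ss by simp
        show ?thesis by (rule dtr_unique[OF d1 d2])
      qed
      define s1 where "s1 = S 1"
      have s1B: "[s1 ^ 2 = B] (mod p)" using eqv_cong1[OF SB] by (simp add: s1_def power2_eq_square)
      then have "p dvd s1 ^ 2 - B" by (simp add: cong_iff_dvd_diff)
      then have "p dvd 4 * (s1 ^ 2 - B)" by (rule dvd_mult)
      have nAp: "\<not> p dvd A + 2 * s1" and nAm: "\<not> p dvd A - 2 * s1"
      proof -
        have "p dvd 4 * (s1 ^ 2 - B)" using \<open>p dvd 4 * (s1 ^ 2 - B)\<close> .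
        show "\<not> p dvd A + 2 * s1"
        proof
          assume "p dvd A + 2 * s1"
          then have "p dvd (A + 2 * s1) * (A - 2 * s1) + 4 * (s1 ^ 2 - B)"
            using \<open>p dvd 4 * (s1 ^ 2 - B)\<close> by simp
          then have "p dvd C0" unfolding C0_def int_facts(1)[of A B s1] .
          then show False using nC by simp
        qed
        show "\<not> p dvd A - 2 * s1"
        proof
          assume "p dvd A - 2 * s1"
          then have "p dvd (A + 2 * s1) * (A - 2 * s1) + 4 * (s1 ^ 2 - B)"
            using \<open>p dvd 4 * (s1 ^ 2 - B)\<close> by simp
          then have "p dvd C0" unfolding C0_def int_facts(1)[of A B s1] .
          then show False using nC by simp
        qed
      qed
      have n4: "\<not> p dvd 4"
      proof
        assume "p dvd 4"
        then have h22: "p dvd 2 * 2" by simp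
        have "p dvd 2 \<or> p dvd 2" using prime_dvd_mult_iff[OF pr, of 2 2] h22 by blast
        then show False using p2 by blast
      qed
      define e where "e = qp_mult p (qp_of_int p d) (qp_add p (qp_of_int p A) (qp_mult p (qp_of_int p 2) s))"
      define e' where "e' = qp_mult p (qp_of_int p d) (qp_add p (qp_of_int p A) (qp_mult p (qp_of_int p (-2)) s))"
      define w where "w = qp_mult p (qp_of_int p (4 * B)) (qp_add p (qp_of_int p A) (qp_mult p (qp_of_int p 2) s))"
      have te: "dtr 0 e (\<lambda>n. d * (A + 2 * S n))"
        unfolding e_def by (rule dm[OF di0 da[OF di0 dm[OF di0 ts]]]) simp_all
      have te': "dtr 0 e' (\<lambda>n. d * (A + -2 * S n))"
        unfolding e'_def by (rule dm[OF di0 da[OF di0 dm[OF di0 ts]]]) simp_all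
      have tw: "dtr 0 w (\<lambda>n. 4 * B * (A + 2 * S n))"
        unfolding w_def by (rule dm[OF di0 da[OF di0 dm[OF di0 ts]]]) simp_all
      have "(\<lambda>n. d * (A + 2 * S n)) = (\<lambda>n. p ^ 1 * (d0 * (A + 2 * S n)))" by (simp add: dd fun_eq_iff mult.assoc)
      then have te1: "dtr 0 e (\<lambda>n. p ^ 1 * (d0 * (A + 2 * S n)))" using te by simp
      have "(\<lambda>n. d * (A + -2 * S n)) = (\<lambda>n. p ^ 1 * (d0 * (A + -2 * S n)))" by (simp add: dd fun_eq_iff mult.assoc)
      then have te1': "dtr 0 e' (\<lambda>n. p ^ 1 * (d0 * (A + -2 * S n)))" using te' by simp
      have cp: "compat (\<lambda>n. d0 * (A + 2 * S n))"
        by (intro compat_smult compat_add compat_const SC)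
      have cm: "compat (\<lambda>n. d0 * (A + -2 * S n))"
        by (intro compat_smult compat_add compat_const SC)
      have np1: "\<not> p dvd d0 * (A + 2 * S 1)" using nd0 nAp pr s1_def by (simp add: prime_dvd_mult_iff)
      have nm1: "\<not> p dvd d0 * (A + -2 * S 1)" using nd0 nAm pr s1_def by (simp add: prime_dvd_mult_iff)
      have enz: "e \<noteq> qp_zero" by (rule nz_from_dtr[OF te1 cp np1])
      have enz': "e' \<noteq> qp_zero" by (rule nz_from_dtr[OF te1' cm nm1])
      have curve: "Some (x, qp_zero) \<in> PS" if tx: "dtr 0 x (\<lambda>n. d * (A + c * S n))" and c2: "c * c = 4" for x c
      proof -
        have "(\<lambda>n. d * (A + c * S n) * (d * (A + c * S n) * (d * (A + c * S n))) +
              ((-2 * d * A) * (d * (A + c * S n) * (d * (A + c * S n))) + (d^2 * (A^2 - 4 * B)) * (d * (A + c * S n))))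
          = (\<lambda>n. (4 * d^2 * (d * (A + c * S n))) * (S n * S n - B))"
        proof
          fix n
          have "d * (A + c * S n) * (d * (A + c * S n) * (d * (A + c * S n))) +
              ((-2 * d * A) * (d * (A + c * S n) * (d * (A + c * S n))) + (d^2 * (A^2 - 4 * B)) * (d * (A + c * S n)))
            = (4 * d^2 * (d * (A + c * S n))) * (S n * S n - B) + (d * (A + c * S n)) * d^2 * (S n * S n) * (c * c - 4)"
            by (simp add: power2_eq_square algebra_simps)
          then show "d * (A + c * S n) * (d * (A + c * S n) * (d * (A + c * S n))) +
              ((-2 * d * A) * (d * (A + c * S n) * (d * (A + c * S n))) + (d^2 * (A^2 - 4 * B)) * (d * (A + c * S n)))
            = (4 * d^2 * (d * (A + c * S n))) * (S n * S n - B)"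
            using c2 by simp
        qed
        moreover have "eqv (\<lambda>n. (4 * d^2 * (d * (A + c * S n))) * (S n * S n - B)) (\<lambda>n. 0)"
          by (rule eqv_zero_prod[OF SB])
        ultimately show ?thesis unfolding PS_def by (intro on_curve0[OF tx]) simp
      qed
      have ce: "Some (e, qp_zero) \<in> qp_points p (-2 * d * A) (d^2 * (A^2 - 4 * B))"
        using curve[OF te] unfolding PS_def by simp
      have ce': "Some (e', qp_zero) \<in> qp_points p (-2 * d * A) (d^2 * (A^2 - 4 * B))"
        using curve[OF te'] unfolding PS_def by simp
      have W3: "sqclass p e \<subseteq> W p A B d"
        unfolding W_def by (rule class_sub_W[OF ce enz])
      have W4': "sqclass p e' \<subseteq> W p A B d"
        unfolding W_def by (rule class_sub_W[OF ce' enz'])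
      have wu: "ulike w"
      proof -
        have "compat (\<lambda>n. 4 * B * (A + 2 * S n))" by (intro compat_smult compat_add compat_const SC)
        moreover have "\<not> p dvd 4 * B * (A + 2 * S 1)" using n4 nB nAp pr s1_def by (simp add: prime_dvd_mult_iff)
        moreover have "eqv (den 0 w) (\<lambda>n. p ^ 0 * (4 * B * (A + 2 * S n)))" using tw by (simp add: dtr_def)
        moreover have "w \<in> Qp p" "fst w \<le> 0" using tw by (simp_all add: dtr_def)
        ultimately show ?thesis unfolding ulike_def by blast
      qed
      have Deq: "qp_mult p (qp_of_int p (disc A B)) e = qp_mult p e' (qp_mult p w w)"
      proof (rule dtr_eq)
        show "dtr 0 (qp_mult p (qp_of_int p (disc A B)) e) (\<lambda>n. disc A B * (d * (A + 2 * S n)))"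
          by (rule dm[OF di0 te]) simp
        show "dtr 0 (qp_mult p e' (qp_mult p w w))
          (\<lambda>n. d * (A + -2 * S n) * (4 * B * (A + 2 * S n) * (4 * B * (A + 2 * S n))))"
          by (rule dm[OF te' dm[OF tw tw]]) simp_all
        have "(\<lambda>n. disc A B * (d * (A + 2 * S n))) = (\<lambda>n. d * (A + -2 * S n) * (4 * B * (A + 2 * S n) * (4 * B * (A + 2 * S n)))
            + (64 * B^2 * d * (A + 2 * S n)) * (S n * S n - B))"
          by (simp add: fun_eq_iff disc_def power2_eq_square algebra_simps)
        moreover have "eqv (\<lambda>n. d * (A + -2 * S n) * (4 * B * (A + 2 * S n) * (4 * B * (A + 2 * S n)))
            + (64 * B^2 * d * (A + 2 * S n)) * (S n * S n - B))
            (\<lambda>n. d * (A + -2 * S n) * (4 * B * (A + 2 * S n) * (4 * B * (A + 2 * S n))) + 0)"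
          by (rule eqv_add[OF eqv_refl eqv_zero_prod[OF SB]])
        ultimately show "eqv (\<lambda>n. disc A B * (d * (A + 2 * S n)))
          (\<lambda>n. d * (A + -2 * S n) * (4 * B * (A + 2 * S n) * (4 * B * (A + 2 * S n))))" by simp
      qed
      have eQ': "e' \<in> Qp p" using te' dtr_Qp by blast
      have W4: "sqclass p (qp_mult p (qp_of_int p (disc A B)) e) \<subseteq> W p A B d"
        using sqclass_sub[OF eQ' wu Deq] W4' by blast
      show ?thesis unfolding e_def[symmetric]
      proof
        show "sq_span2 p (qp_of_int p (disc A B)) e \<subseteq> W p A B d"
          unfolding sq_span2_def using W1 W2 W3 W4 by blast
      next
        show "W p A B d \<subseteq> sq_span2 p (qp_of_int p (disc A B)) e"
        proof (rule Wsub)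
          show "sqclass p (qp_of_int p 1) \<subseteq> sq_span2 p (qp_of_int p (disc A B)) e"
            unfolding sq_span2_def by blast
          show "sqclass p (qp_of_int p (disc A B)) \<subseteq> sq_span2 p (qp_of_int p (disc A B)) e"
            unfolding sq_span2_def by blast
          fix x y assume xy: "Some (x, y) \<in> PS" "x \<noteq> qp_zero"
          note M = MS[OF xy]
          show "sqclass p x \<subseteq> sq_span2 p (qp_of_int p (disc A B)) e"
          proof (cases "\<exists>N U. dtr N x (\<lambda>n. p ^ (N + 1) * U n) \<and> compat U \<and> \<not> p dvd U 1
              \<and> p dvd (U 1 ^ 2 - 2 * d0 * A * U 1 + d0 ^ 2 * (A^2 - 4*B))")
            case False
            then show ?thesis using M S1 S2 unfolding sq_span2_def by blast
          next
            case True
            then obtain N U where U0: "dtr N x (\<lambda>n. p ^ (N + 1) * U n)" "compat U"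
              and U: "\<not> p dvd U 1" "p dvd (U 1 ^ 2 - 2 * d0 * A * U 1 + d0 ^ 2 * (A^2 - 4*B))"
              by (elim exE conjE)
            have "p dvd (U 1 - d0 * (A + 2 * s1)) * (U 1 - d0 * (A - 2 * s1)) + 4 * d0 ^ 2 * (s1 ^ 2 - B)"
              using U(2) unfolding int_facts(2)[of "U 1" d0 A B s1] .
            moreover have "p dvd 4 * d0 ^ 2 * (s1 ^ 2 - B)" using \<open>p dvd s1 ^ 2 - B\<close> by (rule dvd_mult)
            ultimately have "p dvd (U 1 - d0 * (A + 2 * s1)) * (U 1 - d0 * (A - 2 * s1))"
              using dvd_add_left_iff by blast
            then have "p dvd U 1 - d0 * (A + 2 * s1) \<or> p dvd U 1 - d0 * (A - 2 * s1)"
              using pr by (simp add: prime_dvd_mult_iff)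
            then show ?thesis
            proof
              assume a: "p dvd U 1 - d0 * (A + 2 * s1)"
              have "[U 1 = d0 * (A + 2 * S 1)] (mod p)" using a unfolding s1_def cong_iff_dvd_diff .
              then have "[d0 * (A + 2 * S 1) = U 1] (mod p)" by (rule cong_sym)
              then have r: "[d0 * (A + 2 * S 1) * 1 ^ 2 = U 1] (mod p)" by simp
              obtain S2 where S2: "compat S2" "\<not> p dvd S2 1" "eqv (\<lambda>n. d0 * (A + 2 * S n) * S2 n ^ 2) U"
                using hensel[OF p2 cp U0(2) np1 U(1) r] by blast
              have F: "x = qp_mult p e (qp_mult p (0, red (\<lambda>n. p ^ 0 * S2 n)) (0, red (\<lambda>n. p ^ 0 * S2 n)))
                \<and> ulike (0, red (\<lambda>n. p ^ 0 * S2 n))"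
                by (rule finish[OF U0(1) eqv_refl te1 S2(1,2,3)]) simp_all
              have "sqclass p x \<subseteq> sqclass p e"
                using sqclass_sub[OF dtr_Qp[OF te] F[THEN conjunct2] F[THEN conjunct1]] .
              then show ?thesis unfolding sq_span2_def by blast
            next
              assume a: "p dvd U 1 - d0 * (A - 2 * s1)"
              define m where "m = 4 * B * (A + 2 * s1)"
              have nm: "\<not> p dvd m" using n4 nB nAp pr unfolding m_def by (simp add: prime_dvd_mult_iff)
              define T where "T = disc A B * (d0 * (A + 2 * s1)) * 1 ^ 2"
              define K where "K = 64 * B^2 * d0 * (A + 2 * s1) * (s1 ^ 2 - B)"
              have "[U 1 = d0 * (A - 2 * s1)] (mod p)" using a unfolding cong_iff_dvd_diff .
              then have c1: "[U 1 * m ^ 2 = d0 * (A - 2 * s1) * m ^ 2] (mod p)"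
                by (rule cong_mult) (rule cong_refl)
              have eq: "d0 * (A - 2 * s1) * m ^ 2 = T - K"
                unfolding m_def T_def K_def by (simp add: disc_def power2_eq_square algebra_simps)
              have "p dvd K" unfolding K_def using \<open>p dvd s1 ^ 2 - B\<close> by (rule dvd_mult)
              then have "p dvd (T - K) - T" by simp
              then have c2: "[T - K = T] (mod p)" unfolding cong_iff_dvd_diff .
              have "[U 1 * m ^ 2 = T] (mod p)" by (rule cong_trans[OF c1[unfolded eq] c2])
              then have "[disc A B * (d0 * (A + 2 * s1)) * 1 ^ 2 = U 1 * m ^ 2] (mod p)"
                unfolding T_def by (rule cong_sym)
              then obtain r where r: "[disc A B * (d0 * (A + 2 * S 1)) * r ^ 2 = U 1] (mod p)"
                using gen_inv[OF nm] unfolding s1_def by blast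
              have cD: "compat (\<lambda>n. disc A B * (d0 * (A + 2 * S n)))"
                by (intro compat_smult compat_add compat_const SC)
              have nD: "\<not> p dvd disc A B * (d0 * (A + 2 * S 1))"
              proof
                assume "p dvd disc A B * (d0 * (A + 2 * S 1))"
                then have "p dvd disc A B * (d0 * (A + 2 * S 1)) * r ^ 2" by (rule dvd_mult2)
                then have "p dvd U 1" using r cong_dvd_iff by blast
                then show False using U(1) by simp
              qed
              obtain S2 where S2: "compat S2" "\<not> p dvd S2 1"
                  "eqv (\<lambda>n. disc A B * (d0 * (A + 2 * S n)) * S2 n ^ 2) U"
                using hensel[OF p2 cD U0(2) nD U(1) r] by blast
              have tDe0: "dtr 0 (qp_mult p (qp_of_int p (disc A B)) e) (\<lambda>n. disc A B * (d * (A + 2 * S n)))"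
                by (rule dm[OF di0 te]) simp
              have "(\<lambda>n. disc A B * (d * (A + 2 * S n))) = (\<lambda>n. p ^ 1 * (disc A B * (d0 * (A + 2 * S n))))"
                by (simp add: dd fun_eq_iff mult_ac)
              then have tDe: "dtr 0 (qp_mult p (qp_of_int p (disc A B)) e) (\<lambda>n. p ^ 1 * (disc A B * (d0 * (A + 2 * S n))))"
                using tDe0 by simp
              have F: "x = qp_mult p (qp_mult p (qp_of_int p (disc A B)) e)
                    (qp_mult p (0, red (\<lambda>n. p ^ 0 * S2 n)) (0, red (\<lambda>n. p ^ 0 * S2 n)))
                \<and> ulike (0, red (\<lambda>n. p ^ 0 * S2 n))"
                by (rule finish[OF U0(1) eqv_refl tDe S2(1,2,3)]) simp_all
              have "sqclass p x \<subseteq> sqclass p (qp_mult p (qp_of_int p (disc A B)) e)"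
                using sqclass_sub[OF dtr_Qp[OF tDe] F[THEN conjunct2] F[THEN conjunct1]] .
              then show ?thesis unfolding sq_span2_def by blast
            qed
          qed
        qed
      qed
    qed
  qed
qed



end
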